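(* Let $k$ be a positive integer and $n_0,\ldots,n_{k-1}$ positive integers, with indices read modulo $k$. For each $j\in\{0,\ldots,k-1\}$ let $A^{(j)}$ be a real $n_j\times n_{j+1}$ matrix. Then every matrix in $\mathcal{Q}(A^{(0)})\mathcal{Q}(A^{(1)})\cdots\mathcal{Q}(A^{(k-1)})$ is a $P_0$-matrix if and only if the signed digraph $G_{A^{(0)}A^{(1)}\cdots A^{(k-1)}}$ is e-cycle-free.
   Context: Indices $j$ are taken modulo $k$. For a real matrix $M$, the qualitative class $\mathcal{Q}(M)$ is the set of real matrices $X$ of the same dimensions with $M_{ij}>0\Rightarrow X_{ij}>0$, $M_{ij}<0\Rightarrow X_{ij}<0$, $M_{ij}=0\Rightarrow X_{ij}=0$. The set $\mathcal{Q}(A^{(0)})\cdots\mathcal{Q}(A^{(k-1)})$ is $\{B^{(0)}B^{(1)}\cdots B^{(k-1)} : B^{(j)}\in\mathcal{Q}(A^{(j)})\}$. The signed digraph $G=G_{A^{(0)}\cdots A^{(k-1)}}$ has vertex set the disjoint union of sets $V_0,\ldots,V_{k-1}$ with $V_j=\{V_j^1,\ldots,V_j^{n_j}\}$; there is a directed edge from $V_j^r$ to $V_{j+1}^s$ iff $(A^{(j)})_{rs}\neq 0$, with sign equal to the sign of $(A^{(j)})_{rs}$; there are no other edges (for $k=1$, loops are allowed). Every directed cycle in $G$ has length a multiple of $k$. A directed cycle with $kr_1$ edges, of which $r_2$ are negative, is an e-cycle if $(-1)^{r_1+r_2}=1$ and an o-cycle otherwise; $G$ is e-cycle-free if it has no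 e-cycle. A $P_0$-matrix is a real square matrix all of whose principal minors are nonnegative. *)

theory Defs
  imports "Jordan_Normal_Form.Determinant" "Jordan_Normal_Form.DL_Submatrix"
begin

definition qual_class :: "real mat \<Rightarrow> real mat set" where
  "qual_class M = {X. dim_row X = dim_row M \<and> dim_col X = dim_col M \<and>
     (\<forall>i<dim_row M. \<forall>j<dim_col M. sgn (X $$ (i,j)) = sgn (M $$ (i,j)))}"

definition chain_prod :: "nat \<Rightarrow> nat \<Rightarrow> (nat \<Rightarrow> real mat) \<Rightarrow> real mat" where
  "chain_prod m k B = foldr (\<lambda>j P. B j * P) [0..<k] (1\<^sub>m m)"

(* The set Q(A 0) Q(A 1) ... Q(A (k-1)); n 0 is the number of columns of A (k-1) *)
definition qual_product :: "nat \<Rightarrow> (nat \<Rightarrow> nat) \<Rightarrow> (nat \<Rightarrow> real mat) \<Rightarrow> real mat set" where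
  "qual_product k n A = {chain_prod (n 0) k B | B. \<forall>j<k. B j \<in> qual_class (A j)}"

definition P0_matrix :: "real mat \<Rightarrow> bool" where
  "P0_matrix M \<longleftrightarrow> dim_row M = dim_col M \<and>
     (\<forall>I. I \<subseteq> {0..<dim_row M} \<longrightarrow> I \<noteq> {} \<longrightarrow> det (submatrix M I I) \<ge> 0)"

(* Signed digraph G_{A(0)...A(k-1)}: vertex V_j^r is (j, r) with j < k, r < n j *)
definition sd_vertex :: "nat \<Rightarrow> (nat \<Rightarrow> nat) \<Rightarrow> nat \<times> nat \<Rightarrow> bool" where
  "sd_vertex k n v \<longleftrightarrow> fst v < k \<and> snd v < n (fst v)"

definition sd_edge :: "nat \<Rightarrow> (nat \<Rightarrow> nat) \<Rightarrow> (nat \<Rightarrow> real mat) \<Rightarrow> nat \<times> nat \<Rightarrow> nat \<times> nat \<Rightarrow> bool" where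
  "sd_edge k n A v w \<longleftrightarrow> sd_vertex k n v \<and> sd_vertex k n w \<and>
     fst w = (fst v + 1) mod k \<and> A (fst v) $$ (snd v, snd w) \<noteq> 0"

definition sd_edge_sign :: "(nat \<Rightarrow> real mat) \<Rightarrow> nat \<times> nat \<Rightarrow> nat \<times> nat \<Rightarrow> real" where
  "sd_edge_sign A v w = sgn (A (fst v) $$ (snd v, snd w))"

(* A directed cycle given by its list of distinct vertices vs = [v_0, ..., v_{m-1}],
   with edges v_i -> v_{(i+1) mod m}; it has m edges (m = 1 is a loop). *)
definition sd_cycle :: "nat \<Rightarrow> (nat \<Rightarrow> nat) \<Rightarrow> (nat \<Rightarrow> real mat) \<Rightarrow> (nat \<times> nat) list \<Rightarrow> bool" where
  "sd_cycle k n A vs \<longleftrightarrow> vs \<noteq> [] \<and> distinct vs \<and>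
     (\<forall>i<length vs. sd_edge k n A (vs ! i) (vs ! ((i + 1) mod length vs)))"

definition sd_neg_edges :: "(nat \<Rightarrow> real mat) \<Rightarrow> (nat \<times> nat) list \<Rightarrow> nat" where
  "sd_neg_edges A vs = card {i. i < length vs \<and>
      sd_edge_sign A (vs ! i) (vs ! ((i + 1) mod length vs)) < 0}"

(* e-cycle: k*r1 edges, r2 of them negative, (-1)^(r1+r2) = 1 *)
definition sd_e_cycle :: "nat \<Rightarrow> (nat \<Rightarrow> nat) \<Rightarrow> (nat \<Rightarrow> real mat) \<Rightarrow> (nat \<times> nat) list \<Rightarrow> bool" where
  "sd_e_cycle k n A vs \<longleftrightarrow> sd_cycle k n A vs \<and>
     (-1::int) ^ (length vs div k + sd_neg_edges A vs) = 1"

definition e_cycle_free :: "nat \<Rightarrow> (nat \<Rightarrow> nat) \<Rightarrow> (nat \<Rightarrow> real mat) \<Rightarrow> bool" where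
  "e_cycle_free k n A \<longleftrightarrow> \<not> (\<exists>vs. sd_e_cycle k n A vs)"

end

theory Submission
  imports Defs
begin

definition minorb :: "('a \<Rightarrow> 'a) \<Rightarrow> 'a set \<Rightarrow> 'a set \<Rightarrow> bool" where
  "minorb \<sigma> I Q \<longleftrightarrow> Q \<noteq> {} \<and> Q \<subseteq> I \<and> \<sigma> ` Q \<subseteq> Q \<and>
     (\<forall>Q'. Q' \<subseteq> Q \<longrightarrow> Q' \<noteq> {} \<longrightarrow> \<sigma> ` Q' \<subseteq> Q' \<longrightarrow> Q' = Q)"

lemma minorbD:
  assumes "minorb \<sigma> I Q"
  shows "Q \<noteq> {}" "Q \<subseteq> I" "\<sigma> ` Q \<subseteq> Q" "\<And>Q'. Q' \<subseteq> Q \<Longrightarrow> Q' \<noteq> {} \<Longrightarrow> \<sigma> ` Q' \<subseteq> Q' \<Longrightarrow> Q' = Q"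
  using assms unfolding minorb_def by auto

lemma prod_two_remove:
  fixes f :: "'a \<Rightarrow> real"
  assumes "finite I" "a \<in> I" "z \<in> I" "a \<noteq> z"
  shows "(\<Prod>x\<in>I. f x) = f a * f z * (\<Prod>x\<in>I - {a} - {z}. f x)"
proof -
  have "(\<Prod>x\<in>I. f x) = f a * (\<Prod>x\<in>I - {a}. f x)" using assms by (simp add: prod.remove)
  also have "(\<Prod>x\<in>I - {a}. f x) = f z * (\<Prod>x\<in>I - {a} - {z}. f x)"
    using assms by (intro prod.remove) auto
  finally show ?thesis by simp
qed

lemma core_sign:
  fixes s :: "'a \<Rightarrow> real"
  assumes "finite I" "\<sigma> permutes I" "\<forall>x\<in>I. s x = 1 \<or> s x = -1"
    "\<forall>Q. minorb \<sigma> I Q \<longrightarrow> (\<Prod>x\<in>Q. s x) = (-1) ^ (card Q - 1)"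
  shows "of_int (sign \<sigma>) * (\<Prod>x\<in>I. s x) = 1"
  using assms(2-4)
proof (induction "card {x\<in>I. \<sigma> x \<noteq> x}" arbitrary: \<sigma> s rule: less_induct)
  case less
  note perm = less.prems(1)
  show ?case
  proof (cases "\<exists>a\<in>I. \<sigma> a \<noteq> a")
    case False
    have sid: "\<sigma> = id"
    proof
      fix x show "\<sigma> x = id x"
        using False permutes_not_in[OF perm] by (cases "x \<in> I") auto
    qed
    have "s x = 1" if "x \<in> I" for x
    proof -
      have "minorb \<sigma> I {x}" using that sid unfolding minorb_def by auto
      then show ?thesis using less.prems(3) by force
    qed
    then show ?thesis using sid by simp
  next
    case True
    then obtain a where a: "a \<in> I" "\<sigma> a \<noteq> a" by blast
    define b where "b = \<sigma> a"
    define z where "z = inv_into UNIV \<sigma> a"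
    have bI: "b \<in> I" using a perm b_def by (simp add: permutes_in_image)
    have zI: "z \<in> I" using a perm z_def by (simp add: permutes_inv permutes_in_image)
    have sz: "\<sigma> z = a" using perm z_def by (simp add: permutes_inverses(1))
    have ab: "a \<noteq> b" using a b_def by simp
    have za: "z \<noteq> a" using sz a by auto
    have inj: "inj \<sigma>" using perm by (simp add: permutes_inj)
    define \<sigma>' where "\<sigma>' = Transposition.transpose a b \<circ> \<sigma>"
    define s' where "s' = (s(z := - s z * s a))(a := 1)"
    have perm': "\<sigma>' permutes I" unfolding \<sigma>'_def
      by (intro permutes_compose perm permutes_swap_id a bI)
    have s'a: "\<sigma>' a = a" unfolding \<sigma>'_def b_def by simp
    have s'z: "\<sigma>' z = b" unfolding \<sigma>'_def using sz by simp
    have s'o: "\<sigma>' y = \<sigma> y" if "y \<noteq> a" "y \<noteq> z" for y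
    proof -
      have "\<sigma> y \<noteq> a" using that sz inj by (metis injD)
      moreover have "\<sigma> y \<noteq> b" using that b_def inj by (metis injD)
      ultimately show ?thesis unfolding \<sigma>'_def by (simp add: transpose_def)
    qed
    have sub: "{x\<in>I. \<sigma>' x \<noteq> x} \<subset> {x\<in>I. \<sigma> x \<noteq> x}"
    proof
      show "{x\<in>I. \<sigma>' x \<noteq> x} \<subseteq> {x\<in>I. \<sigma> x \<noteq> x}"
      proof clarify
        fix x assume "x \<in> I" "\<sigma>' x \<noteq> x" "\<sigma> x = x"
        then show False using s'a s'o sz za by (cases "x = a"; cases "x = z") auto
      qed
      show "{x\<in>I. \<sigma>' x \<noteq> x} \<noteq> {x\<in>I. \<sigma> x \<noteq> x}" using a s'a by blast
    qed
    have lt: "card {x\<in>I. \<sigma>' x \<noteq> x} < card {x\<in>I. \<sigma> x \<noteq> x}"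
      using sub assms(1) by (intro psubset_card_mono) auto
    have pm': "\<forall>x\<in>I. s' x = 1 \<or> s' x = -1"
    proof -
      have "s a = 1 \<or> s a = -1" "s z = 1 \<or> s z = -1" using less.prems(2) a zI by auto
      then show ?thesis using less.prems(2) unfolding s'_def by auto
    qed
    have hyp': "\<forall>Q. minorb \<sigma>' I Q \<longrightarrow> (\<Prod>x\<in>Q. s' x) = (-1) ^ (card Q - 1)"
    proof (intro allI impI)
      fix Q' assume mo: "minorb \<sigma>' I Q'"
      have fO': "finite Q'" using minorbD(2)[OF mo] assms(1) by (meson finite_subset)
      show "(\<Prod>x\<in>Q'. s' x) = (-1) ^ (card Q' - 1)"
      proof (cases "a \<in> Q'")
        case True
        have "{a} \<subseteq> Q'" "\<sigma>' ` {a} \<subseteq> {a}" using True s'a by auto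
        then have "{a} = Q'" by (intro minorbD(4)[OF mo]) auto
        then show ?thesis unfolding s'_def by auto
      next
        case aO: False
        show ?thesis
        proof (cases "z \<in> Q'")
          case zO: True
          define Q where "Q = insert a Q'"
          have inv: "\<sigma> ` Q \<subseteq> Q"
          proof
            fix w assume "w \<in> \<sigma> ` Q"
            then obtain y where y: "y \<in> Q" "w = \<sigma> y" by blast
            show "w \<in> Q"
            proof (cases "y = a")
              case True then show ?thesis using y s'z zO minorbD(3)[OF mo] unfolding Q_def b_def by auto
            next
              case ya: False
              show ?thesis
              proof (cases "y = z")
                case True then show ?thesis using y sz Q_def by simp
              next
                case False
                then have "y \<in> Q'" using y ya Q_def by simp
                then show ?thesis using y s'o[OF ya False] minorbD(3)[OF mo] unfolding Q_def by auto
              qed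
            qed
          qed
          have mO: "minorb \<sigma> I Q"
            unfolding minorb_def
          proof (intro conjI allI impI)
            show "Q \<noteq> {}" "Q \<subseteq> I" "\<sigma> ` Q \<subseteq> Q" using Q_def a minorbD(1-3)[OF mo] inv by auto
            fix Q'' assume h: "Q'' \<subseteq> Q" "Q'' \<noteq> {}" "\<sigma> ` Q'' \<subseteq> Q''"
            show "Q'' = Q"
            proof (cases "a \<in> Q''")
              case True
              have bO: "b \<in> Q''" using True h(3) b_def by auto
              have "Q'' - {a} = Q'"
              proof -
                have "\<sigma>' ` (Q'' - {a}) \<subseteq> Q'' - {a}"
                proof
                  fix w assume "w \<in> \<sigma>' ` (Q'' - {a})"
                  then obtain y where y: "y \<in> Q''" "y \<noteq> a" "w = \<sigma>' y" by blast
                  show "w \<in> Q'' - {a}"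
                  proof (cases "y = z")
                    case True then show ?thesis using y s'z bO ab by simp
                  next
                    case False
                    have "\<sigma> y \<noteq> a" using False sz inj by (metis injD)
                    then show ?thesis using y s'o[OF y(2) False] h(3) by auto
                  qed
                qed
                moreover have "Q'' - {a} \<subseteq> Q'" using h(1) Q_def by auto
                moreover have "Q'' - {a} \<noteq> {}" using bO ab by auto
                ultimately show ?thesis using minorbD(4)[OF mo] by blast
              qed
              then show ?thesis using True Q_def by auto
            next
              case False
              have zn: "z \<notin> Q''" using False h(3) sz by auto
              have "Q'' \<subseteq> Q'" using h(1) False Q_def by auto
              moreover have "\<sigma>' ` Q'' \<subseteq> Q''"
              proof (rule image_subsetI)
                fix y assume y: "y \<in> Q''"
                then have "y \<noteq> a" "y \<noteq> z" using False zn by auto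
                then show "\<sigma>' y \<in> Q''" using s'o h(3) y by auto
              qed
              ultimately have "Q'' = Q'" using minorbD(4)[OF mo] h(2) by blast
              then show ?thesis using zn zO by simp
            qed
          qed
          have cO: "card Q = Suc (card Q')" using Q_def aO fO' by simp
          have c1: "card Q' \<ge> 1" using zO fO' by (metis One_nat_def Suc_leI card_gt_0_iff empty_iff)
          have pO: "(\<Prod>x\<in>Q. s x) = (-1) ^ card Q'" using less.prems(3) mO cO by simp
          have e5: "(\<Prod>x\<in>Q. s x) = s a * (\<Prod>x\<in>Q'. s x)" using Q_def aO fO' by simp
          have e1: "(\<Prod>x\<in>Q'. s' x) = s' z * (\<Prod>x\<in>Q' - {z}. s' x)" using zO fO' by (simp add: prod.remove)
          have e2: "(\<Prod>x\<in>Q' - {z}. s' x) = (\<Prod>x\<in>Q' - {z}. s x)"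
            using aO unfolding s'_def by (intro prod.cong) auto
          have e3: "s' z = - s z * s a" unfolding s'_def using za by simp
          have e4: "(\<Prod>x\<in>Q'. s x) = s z * (\<Prod>x\<in>Q' - {z}. s x)" using zO fO' by (simp add: prod.remove)
          have "(\<Prod>x\<in>Q'. s' x) = - (\<Prod>x\<in>Q. s x)"
            unfolding e1 e2 e3 e5 e4 by (simp add: algebra_simps)
          moreover obtain d where d: "card Q' = Suc d" using c1 by (cases "card Q'") auto
          ultimately show ?thesis using pO by simp
        next
          case zO: False
          have eqo: "\<sigma>' y = \<sigma> y" if "y \<in> Q'" for y using that aO zO s'o by metis
          have eqi: "\<sigma> ` X = \<sigma>' ` X" if "X \<subseteq> Q'" for X
            using eqo that by (intro image_cong refl) auto
          have mO: "minorb \<sigma> I Q'"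
            unfolding minorb_def
          proof (intro conjI allI impI)
            show "Q' \<noteq> {}" "Q' \<subseteq> I" "\<sigma> ` Q' \<subseteq> Q'" using minorbD(1-3)[OF mo] eqi[of Q'] by auto
            fix Q'' assume "Q'' \<subseteq> Q'" "Q'' \<noteq> {}" "\<sigma> ` Q'' \<subseteq> Q''"
            then show "Q'' = Q'" using minorbD(4)[OF mo] eqi[of Q''] by auto
          qed
          have "(\<Prod>x\<in>Q'. s' x) = (\<Prod>x\<in>Q'. s x)"
            using aO zO unfolding s'_def by (intro prod.cong) auto
          then show ?thesis using less.prems(3) mO by simp
        qed
      qed
    qed
    have IH: "of_int (sign \<sigma>') * (\<Prod>x\<in>I. s' x) = 1"
      using less.hyps[OF lt perm' pm' hyp'] .
    have sg: "sign \<sigma>' = - sign \<sigma>"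
      unfolding \<sigma>'_def
      using sign_compose[OF permutation_swap_id permutes_imp_permutation[OF assms(1) perm]] ab
      by (simp add: sign_swap_id)
    have "(\<Prod>x\<in>I. s' x) = s' a * s' z * (\<Prod>x\<in>I - {a} - {z}. s' x)"
      using prod_two_remove[OF assms(1) a(1) zI za[symmetric]] .
    also have "(\<Prod>x\<in>I - {a} - {z}. s' x) = (\<Prod>x\<in>I - {a} - {z}. s x)"
      unfolding s'_def by (intro prod.cong) auto
    finally have "(\<Prod>x\<in>I. s' x) = - (s a * s z * (\<Prod>x\<in>I - {a} - {z}. s x))"
      unfolding s'_def using za by simp
    also have "s a * s z * (\<Prod>x\<in>I - {a} - {z}. s x) = (\<Prod>x\<in>I. s x)"
      using prod_two_remove[OF assms(1) a(1) zI za[symmetric]] by simp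
    finally show ?thesis using IH sg by simp
  qed
qed


lemma pick_bij:
  assumes "finite I"
  shows "bij_betw (pick I) {0..<card I} I"
proof -
  have inj: "inj_on (pick I) {0..<card I}"
    by (rule inj_onI) (metis atLeastLessThan_iff linorder_neqE_nat pick_mono_le less_irrefl)
  have sub: "pick I ` {0..<card I} \<subseteq> I" using pick_in_set_le by auto
  have "card (pick I ` {0..<card I}) = card I" using card_image[OF inj] by simp
  then have "pick I ` {0..<card I} = I" using card_subset_eq[OF assms sub] by simp
  then show ?thesis using inj unfolding bij_betw_def by simp
qed

lemma det_submatrix_perm:
  fixes M :: "real mat"
  assumes "M \<in> carrier_mat N N" "I \<subseteq> {0..<N}"
  shows "det (submatrix M I I) = (\<Sum>\<sigma>\<in>{\<sigma>. \<sigma> permutes I}. of_int (sign \<sigma>) * (\<Prod>i\<in>I. M $$ (i, \<sigma> i)))"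
proof -
  have fI: "finite I" using assms(2) finite_subset by blast
  define m where "m = card I"
  have cI: "{i. i < dim_row M \<and> i \<in> I} = I" "{i. i < dim_col M \<and> i \<in> I} = I" using assms by auto
  have "dim_row (submatrix M I I) = m" "dim_col (submatrix M I I) = m"
    by (simp_all only: dim_submatrix cI m_def)
  then have sc: "submatrix M I I \<in> carrier_mat m m" unfolding carrier_mat_def by simp
  define f where "f = pick I"
  have bij: "bij_betw f {0..<m} I" unfolding f_def m_def by (rule pick_bij[OF fI])
  have injf: "inj_on f {0..<m}" using bij bij_betw_def by blast
  define h where "h = map_permutation {0..<m} f"
  have hb: "bij_betw h {p. p permutes {0..<m}} {\<sigma>. \<sigma> permutes I}"
  proof -
    have "h = (\<lambda>\<pi> x. if x \<in> I then f (\<pi> (inv_into {0..<m} f x)) else x)"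
      using bij unfolding h_def map_permutation_def restrict_id_def bij_betw_def by (auto simp: fun_eq_iff)
    then show ?thesis using bij_betw_permutations[OF bij] by simp
  qed
  have "det (submatrix M I I) = (\<Sum>p\<in>{p. p permutes {0..<m}}. of_int (sign p) * (\<Prod>a = 0..<m. M $$ (f a, f (p a))))"
    unfolding det_def'[OF sc]
  proof (intro sum.cong refl arg_cong2[where f="(*)"] prod.cong)
    fix p a assume p: "p \<in> {p. p permutes {0..<m}}" and a: "a \<in> {0..<m}"
    have "p a < m" using p a by (auto simp: permutes_in_image)
    then show "submatrix M I I $$ (a, p a) = M $$ (f a, f (p a))"
      using a unfolding f_def by (subst submatrix_index) (auto simp: cI m_def)
  qed
  also have "\<dots> = (\<Sum>p\<in>{p. p permutes {0..<m}}. of_int (sign (h p)) * (\<Prod>i\<in>I. M $$ (i, h p i)))"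
  proof (intro sum.cong refl)
    fix p assume p: "p \<in> {p. p permutes {0..<m}}"
    have "sign (h p) = sign p" unfolding h_def using p injf by (intro sign_map_permutation) auto
    moreover have "(\<Prod>i\<in>I. M $$ (i, h p i)) = (\<Prod>a = 0..<m. M $$ (f a, f (p a)))"
    proof -
      have "(\<Prod>i\<in>I. M $$ (i, h p i)) = (\<Prod>a = 0..<m. M $$ (f a, h p (f a)))"
        using prod.reindex_bij_betw[OF bij, of "\<lambda>i. M $$ (i, h p i)"] by simp
      also have "\<dots> = (\<Prod>a = 0..<m. M $$ (f a, f (p a)))"
        unfolding h_def using injf by (intro prod.cong refl) (simp add: map_permutation_apply)
      finally show ?thesis .
    qed
    ultimately show "of_int (sign p) * (\<Prod>a = 0..<m. M $$ (f a, f (p a))) = of_int (sign (h p)) * (\<Prod>i\<in>I. M $$ (i, h p i))"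
      by simp
  qed
  also have "\<dots> = (\<Sum>\<sigma>\<in>{\<sigma>. \<sigma> permutes I}. of_int (sign \<sigma>) * (\<Prod>i\<in>I. M $$ (i, \<sigma> i)))"
    using sum.reindex_bij_betw[OF hb, of "\<lambda>\<sigma>. of_int (sign \<sigma>) * (\<Prod>i\<in>I. M $$ (i, \<sigma> i))"] by simp
  finally show ?thesis .
qed


definition Dm :: "real mat \<Rightarrow> (nat \<Rightarrow> nat) \<Rightarrow> nat set \<Rightarrow> real" where
  "Dm M f I = (\<Sum>\<sigma>\<in>{\<sigma>. \<sigma> permutes I}. of_int (sign \<sigma>) * (\<Prod>i\<in>I. M $$ (f i, \<sigma> i)))"

lemma Dm_cong: "(\<And>i. i \<in> I \<Longrightarrow> f i = g i) \<Longrightarrow> Dm M f I = Dm M g I"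
  unfolding Dm_def by (intro sum.cong refl arg_cong2[where f="(*)"] prod.cong) auto

lemma Dm_noninj:
  assumes "finite I" "\<not> inj_on f I"
  shows "Dm M f I = 0"
proof -
  obtain x y where xy: "x \<in> I" "y \<in> I" "x \<noteq> y" "f x = f y" using assms(2) unfolding inj_on_def by blast
  define \<tau> where "\<tau> = Transposition.transpose x y"
  have tp: "\<tau> permutes I" unfolding \<tau>_def using xy by (simp add: permutes_swap_id)
  have ftau: "f (\<tau> i) = f i" for i unfolding \<tau>_def using xy by (simp add: transpose_def)
  define T where "T \<sigma> = of_int (sign \<sigma>) * (\<Prod>i\<in>I. M $$ (f i, \<sigma> i))" for \<sigma>
  have tt: "\<tau> \<circ> \<tau> = id" unfolding \<tau>_def by simp
  have "(\<Sum>\<sigma>\<in>{\<sigma>. \<sigma> permutes I}. T \<sigma>) = (\<Sum>\<sigma>\<in>{\<sigma>. \<sigma> permutes I}. T (\<sigma> \<circ> \<tau>))"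
    by (rule sum.reindex_bij_witness[where i="\<lambda>\<sigma>. \<sigma> \<circ> \<tau>" and j="\<lambda>\<sigma>. \<sigma> \<circ> \<tau>"])
       (use tt tp in \<open>auto simp: comp_assoc permutes_compose\<close>)
  also have "\<dots> = (\<Sum>\<sigma>\<in>{\<sigma>. \<sigma> permutes I}. - T \<sigma>)"
  proof (intro sum.cong refl)
    fix \<sigma> assume s: "\<sigma> \<in> {\<sigma>. \<sigma> permutes I}"
    have sg: "sign (\<sigma> \<circ> \<tau>) = - sign \<sigma>"
      using sign_compose[OF permutes_imp_permutation[OF assms(1)] permutes_imp_permutation[OF assms(1) tp], of \<sigma>] s xy
      unfolding \<tau>_def by (simp add: sign_swap_id)
    have "(\<Prod>i\<in>I. M $$ (f i, (\<sigma> \<circ> \<tau>) i)) = (\<Prod>i\<in>I. M $$ (f (\<tau> i), \<sigma> (\<tau> i)))"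
      using ftau by simp
    also have "\<dots> = (\<Prod>i\<in>I. M $$ (f i, \<sigma> i))"
      using prod.reindex_bij_betw[OF permutes_imp_bij[OF tp], of "\<lambda>i. M $$ (f i, \<sigma> i)"] by simp
    finally show "T (\<sigma> \<circ> \<tau>) = - T \<sigma>" unfolding T_def sg by simp
  qed
  finally have "(\<Sum>\<sigma>\<in>{\<sigma>. \<sigma> permutes I}. T \<sigma>) = 0" by (simp add: sum_negf)
  then show ?thesis unfolding Dm_def T_def by simp
qed

lemma mult_entry:
  fixes A B :: "real mat"
  assumes "A \<in> carrier_mat r c" "B \<in> carrier_mat c q" "i < r" "j < q"
  shows "(A * B) $$ (i, j) = (\<Sum>t\<in>{0..<c}. A $$ (i, t) * B $$ (t, j))"
  using assms by (simp add: scalar_prod_def)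

definition InjS :: "nat set \<Rightarrow> nat \<Rightarrow> (nat \<Rightarrow> nat) set" where
  "InjS I c = {g \<in> PiE I (\<lambda>_. {0..<c}). inj_on g I}"

lemma finite_InjS: "finite I \<Longrightarrow> finite (InjS I c)"
  unfolding InjS_def by (intro finite_subset[OF _ finite_PiE[of I "\<lambda>_. {0..<c}"]]) auto

lemma Dm_mult:
  fixes A B :: "real mat"
  assumes "A \<in> carrier_mat r c" "B \<in> carrier_mat c q" "I \<subseteq> {0..<q}" "\<And>i. i \<in> I \<Longrightarrow> f i < r"
  shows "Dm (A * B) f I = (\<Sum>g\<in>InjS I c. (\<Prod>i\<in>I. A $$ (f i, g i)) * Dm B g I)"
proof -
  have fI: "finite I" using assms(3) finite_subset by blast
  have "Dm (A * B) f I = (\<Sum>\<sigma>\<in>{\<sigma>. \<sigma> permutes I}. of_int (sign \<sigma>) *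
      (\<Prod>i\<in>I. \<Sum>t\<in>{0..<c}. A $$ (f i, t) * B $$ (t, \<sigma> i)))"
    unfolding Dm_def
  proof (intro sum.cong refl arg_cong2[where f="(*)"] prod.cong)
    fix \<sigma> i assume "\<sigma> \<in> {\<sigma>. \<sigma> permutes I}" "i \<in> I"
    then have "\<sigma> i \<in> I" by (simp add: permutes_in_image)
    then show "(A * B) $$ (f i, \<sigma> i) = (\<Sum>t\<in>{0..<c}. A $$ (f i, t) * B $$ (t, \<sigma> i))"
      using assms \<open>i \<in> I\<close> by (intro mult_entry) auto
  qed
  also have "\<dots> = (\<Sum>\<sigma>\<in>{\<sigma>. \<sigma> permutes I}. of_int (sign \<sigma>) *
      (\<Sum>g\<in>PiE I (\<lambda>_. {0..<c}). \<Prod>i\<in>I. A $$ (f i, g i) * B $$ (g i, \<sigma> i)))"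
    by (intro sum.cong refl arg_cong2[where f="(*)"] prod_sum_PiE[OF fI]) auto
  also have "\<dots> = (\<Sum>\<sigma>\<in>{\<sigma>. \<sigma> permutes I}. \<Sum>g\<in>PiE I (\<lambda>_. {0..<c}).
      (\<Prod>i\<in>I. A $$ (f i, g i)) * (of_int (sign \<sigma>) * (\<Prod>i\<in>I. B $$ (g i, \<sigma> i))))"
    by (simp add: sum_distrib_left prod.distrib algebra_simps)
  also have "\<dots> = (\<Sum>g\<in>PiE I (\<lambda>_. {0..<c}). (\<Prod>i\<in>I. A $$ (f i, g i)) * Dm B g I)"
    unfolding Dm_def by (subst sum.swap) (simp add: sum_distrib_left)
  also have "\<dots> = (\<Sum>g\<in>InjS I c. (\<Prod>i\<in>I. A $$ (f i, g i)) * Dm B g I)"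
    unfolding InjS_def
    by (rule sum.mono_neutral_right) (auto simp: Dm_noninj[OF fI] intro: finite_PiE fI)
  finally show ?thesis .
qed

lemma sum_PiE_insert:
  fixes F :: "('a \<Rightarrow> 'b) \<Rightarrow> real"
  assumes "x \<notin> S" "finite S" "\<And>y. finite (T y)"
  shows "(\<Sum>G\<in>PiE (insert x S) T. F G) = (\<Sum>y\<in>T x. \<Sum>G\<in>PiE S T. F (G(x := y)))"
proof -
  have "(\<Sum>G\<in>PiE (insert x S) T. F G) = (\<Sum>p\<in>T x \<times> PiE S T. F ((\<lambda>(y, g). g(x := y)) p))"
    unfolding PiE_insert_eq using sum.reindex[OF inj_combinator[OF assms(1), of T], of F] by (simp add: comp_def)
  also have "\<dots> = (\<Sum>y\<in>T x. \<Sum>G\<in>PiE S T. F (G(x := y)))"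
    by (subst sum.cartesian_product) (auto intro!: sum.cong)
  finally show ?thesis .
qed


lemma Dm_one:
  assumes "I \<subseteq> {0..<n}" "g \<in> InjS I n"
  shows "Dm (1\<^sub>m n) g I = (if g ` I = I then of_int (sign (restrict_id g I)) else 0)"
proof -
  have fI: "finite I" using assms(1) finite_subset by blast
  have g: "inj_on g I" "\<And>i. i \<in> I \<Longrightarrow> g i < n" using assms(2) unfolding InjS_def by auto
  have t: "(\<Prod>i\<in>I. (1\<^sub>m n :: real mat) $$ (g i, \<sigma> i)) = (if \<forall>i\<in>I. g i = \<sigma> i then 1 else 0)"
    if "\<sigma> permutes I" for \<sigma>
  proof -
    have "(1\<^sub>m n :: real mat) $$ (g i, \<sigma> i) = (if g i = \<sigma> i then 1 else 0)" if "i \<in> I" for i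
    proof -
      have "\<sigma> i \<in> I" using \<open>\<sigma> permutes I\<close> that by (simp add: permutes_in_image)
      then show ?thesis using assms(1) g(2)[OF that] by auto
    qed
    then have "(\<Prod>i\<in>I. (1\<^sub>m n :: real mat) $$ (g i, \<sigma> i)) = (\<Prod>i\<in>I. (if g i = \<sigma> i then 1 else 0))"
      by (intro prod.cong) auto
    also have "\<dots> = (if \<forall>i\<in>I. g i = \<sigma> i then 1 else 0)"
      using fI by (auto simp: prod_zero_iff)
    finally show ?thesis .
  qed
  have "Dm (1\<^sub>m n) g I = (\<Sum>\<sigma>\<in>{\<sigma>. \<sigma> permutes I}. (if \<forall>i\<in>I. g i = \<sigma> i then of_int (sign \<sigma>) else 0))"
    unfolding Dm_def by (intro sum.cong refl) (simp add: t)
  also have "\<dots> = (\<Sum>\<sigma>\<in>{\<sigma>. \<sigma> permutes I \<and> (\<forall>i\<in>I. g i = \<sigma> i)}. of_int (sign \<sigma>))"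
    using sum.inter_filter[of "{\<sigma>. \<sigma> permutes I}" "\<lambda>\<sigma>. of_int (sign \<sigma>) :: real" "\<lambda>\<sigma>. \<forall>i\<in>I. g i = \<sigma> i", symmetric]
      finite_permutations[OF fI]
    by (simp add: Collect_conj_eq)
  also have "{\<sigma>. \<sigma> permutes I \<and> (\<forall>i\<in>I. g i = \<sigma> i)} = (if g ` I = I then {restrict_id g I} else {})"
  proof (cases "g ` I = I")
    case True
    have bij: "bij_betw g I I" using True g(1) by (simp add: bij_betw_def)
    have "\<sigma> = restrict_id g I" if "\<sigma> permutes I" "\<forall>i\<in>I. g i = \<sigma> i" for \<sigma>
    proof
      fix x show "\<sigma> x = restrict_id g I x"
        using that permutes_not_in[OF that(1)] by (cases "x \<in> I") auto
    qed
    then show ?thesis using True permutes_restrict_id[OF bij] by auto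
  next
    case False
    have "g ` I = I" if "\<sigma> permutes I" "\<forall>i\<in>I. g i = \<sigma> i" for \<sigma>
    proof -
      have "g ` I = \<sigma> ` I" using that(2) by (intro image_cong) auto
      then show ?thesis using permutes_image[OF that(1)] by simp
    qed
    then show ?thesis using False by auto
  qed
  finally show ?thesis by simp
qed

locale chain =
  fixes k :: nat and N :: "nat \<Rightarrow> nat" and B :: "nat \<Rightarrow> real mat" and I :: "nat set"
  assumes Bdim: "\<And>l. l < k \<Longrightarrow> B l \<in> carrier_mat (N l) (N (Suc l))"
    and Isub: "I \<subseteq> {0..<N k}"
begin

definition R :: "nat \<Rightarrow> real mat" where
  "R j = foldr (\<lambda>l P. B l * P) [j..<k] (1\<^sub>m (N k))"

lemma R_k: "R k = 1\<^sub>m (N k)" unfolding R_def by simp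

lemma R_step: "j < k \<Longrightarrow> R j = B j * R (Suc j)"
  unfolding R_def by (simp add: upt_conv_Cons)

lemma R_dim: "j \<le> k \<Longrightarrow> R j \<in> carrier_mat (N j) (N k)"
proof (induction "k - j" arbitrary: j)
  case 0 then have "j = k" by simp
  then show ?case using R_k by simp
next
  case (Suc d)
  then have "j < k" by simp
  have "R (Suc j) \<in> carrier_mat (N (Suc j)) (N k)" using Suc.hyps(1)[of "Suc j"] Suc.hyps(2) by simp
  then show ?case using R_step[OF \<open>j < k\<close>] Bdim[OF \<open>j < k\<close>] by (metis mult_carrier_mat)
qed

lemma fin_I: "finite I" using Isub finite_subset by blast

definition W :: "nat \<Rightarrow> (nat \<Rightarrow> nat \<Rightarrow> nat) \<Rightarrow> real" where
  "W j H = (if H k ` I = I then of_int (sign (restrict_id (H k) I)) else 0) *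
     (\<Prod>i\<in>I. \<Prod>l\<in>{j..<k}. B l $$ (H l i, H (Suc l) i))"

definition Cf :: "nat \<Rightarrow> (nat \<Rightarrow> nat \<Rightarrow> nat) set" where
  "Cf j = PiE {Suc j..k} (\<lambda>l. InjS I (N l))"

lemma expand:
  "j \<le> k \<Longrightarrow> g \<in> InjS I (N j) \<Longrightarrow> Dm (R j) g I = (\<Sum>G\<in>Cf j. W j (G(j := g)))"
proof (induction "k - j" arbitrary: j g)
  case 0
  then have jk: "j = k" by simp
  have "Cf j = {\<lambda>_. undefined}" unfolding Cf_def jk by simp
  then show ?case unfolding jk R_k W_def using Dm_one[OF Isub] 0(3) jk by simp
next
  case (Suc d)
  then have jk: "j < k" by simp
  have IH: "Dm (R (Suc j)) g' I = (\<Sum>G\<in>Cf (Suc j). W (Suc j) (G(Suc j := g')))"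
    if "g' \<in> InjS I (N (Suc j))" for g'
    using Suc.hyps(1)[of "Suc j" g'] Suc.hyps(2) jk that by simp
  have gj: "\<And>i. i \<in> I \<Longrightarrow> g i < N j" using Suc.prems(2) unfolding InjS_def by auto
  have "Dm (R j) g I = (\<Sum>g'\<in>InjS I (N (Suc j)). (\<Prod>i\<in>I. B j $$ (g i, g' i)) * Dm (R (Suc j)) g' I)"
    unfolding R_step[OF jk]
    by (rule Dm_mult[OF Bdim[OF jk] R_dim Isub gj]) (use jk in auto)
  also have "\<dots> = (\<Sum>g'\<in>InjS I (N (Suc j)). \<Sum>G\<in>Cf (Suc j). (\<Prod>i\<in>I. B j $$ (g i, g' i)) * W (Suc j) (G(Suc j := g')))"
    by (intro sum.cong refl) (simp add: IH sum_distrib_left)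
  also have "\<dots> = (\<Sum>g'\<in>InjS I (N (Suc j)). \<Sum>G\<in>Cf (Suc j). W j (G(Suc j := g', j := g)))"
  proof (intro sum.cong refl)
    fix g' G
    let ?H = "G(Suc j := g', j := g)"
    let ?H' = "G(Suc j := g')"
    have hk: "?H k = ?H' k" using jk by simp
    have p1: "(\<Prod>l\<in>{j..<k}. B l $$ (?H l i, ?H (Suc l) i)) =
       B j $$ (g i, g' i) * (\<Prod>l\<in>{Suc j..<k}. B l $$ (?H' l i, ?H' (Suc l) i))" for i
    proof -
      have "{j..<k} = insert j {Suc j..<k}" using jk by auto
      then have "(\<Prod>l\<in>{j..<k}. B l $$ (?H l i, ?H (Suc l) i)) =
        B j $$ (g i, g' i) * (\<Prod>l\<in>{Suc j..<k}. B l $$ (?H l i, ?H (Suc l) i))"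
        by simp
      also have "(\<Prod>l\<in>{Suc j..<k}. B l $$ (?H l i, ?H (Suc l) i)) = (\<Prod>l\<in>{Suc j..<k}. B l $$ (?H' l i, ?H' (Suc l) i))"
        by (intro prod.cong refl) auto
      finally show ?thesis .
    qed
    have "W j ?H = (if ?H' k ` I = I then of_int (sign (restrict_id (?H' k) I)) else 0) *
      ((\<Prod>i\<in>I. B j $$ (g i, g' i)) * (\<Prod>i\<in>I. \<Prod>l\<in>{Suc j..<k}. B l $$ (?H' l i, ?H' (Suc l) i)))"
      unfolding W_def hk by (simp only: p1 prod.distrib)
    then show "(\<Prod>i\<in>I. B j $$ (g i, g' i)) * W (Suc j) ?H' = W j ?H"
      unfolding W_def by (simp only: mult_ac)
  qed
  also have "\<dots> = (\<Sum>G\<in>Cf j. W j (G(j := g)))"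
  proof -
    have e: "{Suc j..k} = insert (Suc j) {Suc (Suc j)..k}" using jk by auto
    have "(\<Sum>G\<in>Cf j. W j (G(j := g))) = (\<Sum>g'\<in>InjS I (N (Suc j)). \<Sum>G\<in>Cf (Suc j). W j (G(Suc j := g', j := g)))"
      unfolding Cf_def e
      by (subst sum_PiE_insert) (auto intro: finite_InjS fin_I)
    then show ?thesis by simp
  qed
  finally show ?case .
qed

end


lemma funpow_period:
  assumes "(f ^^ d) x = x"
  shows "(f ^^ (d * m + r)) x = (f ^^ r) x"
proof -
  have "(f ^^ (d * m)) x = x"
  proof (induction m)
    case (Suc m)
    have "(f ^^ (d * Suc m)) x = (f ^^ d) ((f ^^ (d * m)) x)"
      by (simp add: funpow_add)
    then show ?case using Suc assms by simp
  qed simp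
  then show ?thesis by (simp add: funpow_add add.commute[of "d*m"])
qed

lemma funpow_mod:
  assumes "(f ^^ d) x = x"
  shows "(f ^^ p) x = (f ^^ (p mod d)) x"
  using funpow_period[OF assms, of "p div d" "p mod d"] by simp

lemma orbit_facts:
  assumes fI: "finite I" and perm: "\<sigma> permutes I" and mQ: "minorb \<sigma> I Q" and xQ: "x \<in> Q"
  shows "\<And>p. (\<sigma> ^^ p) x \<in> Q" "(\<sigma> ^^ card Q) x = x" "inj_on (\<lambda>p. (\<sigma> ^^ p) x) {..<card Q}"
    "(\<lambda>p. (\<sigma> ^^ p) x) ` {..<card Q} = Q" "card Q > 0"
proof -
  have QI: "Q \<subseteq> I" using minorbD(2)[OF mQ] .
  have fQ: "finite Q" using QI fI finite_subset by blast
  show yQ: "(\<sigma> ^^ p) x \<in> Q" for p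
  proof (induction p)
    case (Suc p) then show ?case using minorbD(3)[OF mQ] by auto
  qed (simp add: xQ)
  show Lpos: "card Q > 0" using fQ xQ card_gt_0_iff by blast
  define y where "y p = (\<sigma> ^^ p) x" for p
  have rng: "range y = Q"
  proof (rule minorbD(4)[OF mQ])
    show "range y \<subseteq> Q" using yQ y_def by auto
    show "range y \<noteq> {}" by simp
    show "\<sigma> ` range y \<subseteq> range y"
    proof
      fix w assume "w \<in> \<sigma> ` range y"
      then obtain p where "w = \<sigma> (y p)" by auto
      then have "w = y (Suc p)" unfolding y_def by simp
      then show "w \<in> range y" by simp
    qed
  qed
  have injs: "inj \<sigma>" using perm permutes_inj by blast
  have "\<not> inj_on y {..card Q}"
  proof
    assume "inj_on y {..card Q}"
    moreover have "y ` {..card Q} \<subseteq> Q" using yQ y_def by auto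
    ultimately have "card {..card Q} \<le> card Q" using card_inj_on_le fQ by blast
    then show False by simp
  qed
  then obtain p q where pq: "p \<le> card Q" "q \<le> card Q" "p < q" "y p = y q"
    unfolding inj_on_def by (metis atMost_iff linorder_neqE_nat)
  define d where "d = q - p"
  have dpos: "d > 0" "d \<le> card Q" using pq d_def by auto
  have "(\<sigma> ^^ (p + d)) x = (\<sigma> ^^ p) ((\<sigma> ^^ d) x)" by (simp add: funpow_add)
  moreover have "p + d = q" using pq d_def by simp
  ultimately have "(\<sigma> ^^ p) ((\<sigma> ^^ d) x) = (\<sigma> ^^ p) x" using pq unfolding y_def by simp
  then have yd: "(\<sigma> ^^ d) x = x" using inj_fn[OF injs, of p] by (meson injD)
  have "Q \<subseteq> y ` {..<d}"
  proof
    fix w assume "w \<in> Q"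
    then obtain r where "w = y r" using rng by auto
    then have "w = y (r mod d)" using funpow_mod[OF yd] unfolding y_def by simp
    then show "w \<in> y ` {..<d}" using dpos by auto
  qed
  then have "card Q \<le> card (y ` {..<d})" by (simp add: card_mono)
  also have "\<dots> \<le> d" using card_image_le[of "{..<d}" y] by simp
  finally have dL: "d = card Q" using dpos by simp
  show yL: "(\<sigma> ^^ card Q) x = x" using yd dL by simp
  have img: "y ` {..<card Q} = Q"
  proof
    show "y ` {..<card Q} \<subseteq> Q" using rng by auto
    show "Q \<subseteq> y ` {..<card Q}"
    proof
      fix w assume "w \<in> Q"
      then obtain r where "w = y r" using rng by auto
      then have "w = y (r mod card Q)" using funpow_mod[OF yL] unfolding y_def by simp
      then show "w \<in> y ` {..<card Q}" using Lpos by auto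
    qed
  qed
  then show "(\<lambda>p. (\<sigma> ^^ p) x) ` {..<card Q} = Q" unfolding y_def .
  show "inj_on (\<lambda>p. (\<sigma> ^^ p) x) {..<card Q}"
    using eq_card_imp_inj_on[of "{..<card Q}" y] img unfolding y_def by simp
qed

lemma prod_shift_block: "prod (f::nat \<Rightarrow> real) {a..<a + k} = (\<Prod>l<k. f (a + l))"
proof -
  have "prod f {0 + a..<k + a} = prod (\<lambda>i. f (i + a)) {0..<k}" by (rule prod.shift_bounds_nat_ivl)
  then show ?thesis by (simp add: lessThan_atLeast0 add.commute)
qed

lemma prod_pm1:
  fixes e :: "nat \<Rightarrow> real"
  assumes "finite S" "\<And>q. q \<in> S \<Longrightarrow> e q = 1 \<or> e q = -1"
  shows "(\<Prod>q\<in>S. e q) = (-1) ^ card {q\<in>S. e q < 0}"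
proof -
  have "(\<Prod>q\<in>S. e q) = (\<Prod>q\<in>S. if e q < 0 then -1 else 1)"
    using assms(2) by (intro prod.cong refl) force
  also have "\<dots> = (\<Prod>q\<in>{q\<in>S. e q < 0}. -1)"
    using assms(1) by (simp add: prod.If_cases Int_def)
  also have "\<dots> = (-1) ^ card {q\<in>S. e q < 0}" by simp
  finally show ?thesis .
qed

locale cyc =
  fixes k :: nat and n :: "nat \<Rightarrow> nat" and A :: "nat \<Rightarrow> real mat" and H :: "nat \<Rightarrow> nat \<Rightarrow> nat"
    and \<sigma> :: "nat \<Rightarrow> nat" and I Q :: "nat set" and x :: nat
  assumes kpos: "k > 0" and finI: "finite I" and perm: "\<sigma> permutes I" and mQ: "minorb \<sigma> I Q" and xQ: "x \<in> Q"
    and Hinj: "\<And>l. l \<le> k \<Longrightarrow> inj_on (H l) I"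
    and Hbd: "\<And>l i. l < k \<Longrightarrow> i \<in> I \<Longrightarrow> H l i < n l"
    and H0: "\<And>i. i \<in> I \<Longrightarrow> H 0 i = i"
    and Hk: "\<And>i. i \<in> I \<Longrightarrow> H k i = \<sigma> i"
    and Hnz: "\<And>l i. l < k \<Longrightarrow> i \<in> I \<Longrightarrow> A l $$ (H l i, H (Suc l) i) \<noteq> 0"
begin

definition L where "L = card Q"
definition y where "y p = (\<sigma> ^^ p) x"
definition V where "V q = (q mod k, H (q mod k) (y (q div k)))"
definition vs where "vs = map V [0..<k * L]"

lemma QI: "Q \<subseteq> I" using minorbD(2)[OF mQ] .
lemma yQ: "y p \<in> Q" unfolding y_def using orbit_facts(1)[OF finI perm mQ xQ] .
lemma yI: "y p \<in> I" using yQ QI by auto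
lemma yL: "(\<sigma> ^^ L) x = x" unfolding L_def using orbit_facts(2)[OF finI perm mQ xQ] .
lemma y_inj: "inj_on y {..<L}" unfolding L_def y_def using orbit_facts(3)[OF finI perm mQ xQ] .
lemma y_img: "y ` {..<L} = Q" unfolding L_def y_def using orbit_facts(4)[OF finI perm mQ xQ] .
lemma Lpos: "L > 0" unfolding L_def using orbit_facts(5)[OF finI perm mQ xQ] .
lemma y_Suc: "y (Suc p) = \<sigma> (y p)" unfolding y_def by simp
lemma y_mod: "y p = y (p mod L)" unfolding y_def using funpow_mod[OF yL] .

lemma V_mod: "V (q mod (k * L)) = V q"
proof -
  have e1: "q mod (k * L) = k * (q div k mod L) + q mod k" by (simp add: mod_mult2_eq)
  have "q mod (k * L) mod k = q mod k" unfolding e1 by simp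
  moreover have "q mod (k * L) div k = q div k mod L" unfolding e1 using kpos by simp
  ultimately show ?thesis unfolding V_def using y_mod[of "q div k"] by simp
qed

lemma V_snd_Suc: "snd (V (Suc q)) = H (Suc (q mod k)) (y (q div k))"
proof (cases "Suc (q mod k) = k")
  case True
  then have "Suc q mod k = 0" "Suc q div k = Suc (q div k)"
    using mod_Suc[of q k] div_Suc[of q k] by auto
  then show ?thesis unfolding V_def using True H0[OF yI[of "Suc (q div k)"]] Hk[OF yI[of "q div k"]]
    by (simp add: y_Suc)
next
  case False
  then have "Suc q mod k = Suc (q mod k)" "Suc q div k = q div k"
    using mod_Suc[of q k] div_Suc[of q k] by auto
  then show ?thesis unfolding V_def by simp
qed

lemma V_fst_Suc: "fst (V (Suc q)) = (fst (V q) + 1) mod k"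
  unfolding V_def by (simp add: mod_Suc_eq)

lemma V_vertex: "sd_vertex k n (V q)"
  unfolding sd_vertex_def V_def using kpos Hbd yI by simp

lemma V_edge: "sd_edge k n A (V q) (V (Suc q))"
  unfolding sd_edge_def
proof (intro conjI)
  show "sd_vertex k n (V q)" "sd_vertex k n (V (Suc q))" by (rule V_vertex)+
  show "fst (V (Suc q)) = (fst (V q) + 1) mod k" by (rule V_fst_Suc)
  show "A (fst (V q)) $$ (snd (V q), snd (V (Suc q))) \<noteq> 0"
    unfolding V_snd_Suc by (simp add: V_def Hnz kpos yI)
qed

lemma V_inj: "inj_on V {0..<k * L}"
proof
  fix a b assume a: "a \<in> {0..<k * L}" and b: "b \<in> {0..<k * L}" and e: "V a = V b"
  then have m: "a mod k = b mod k" unfolding V_def by simp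
  then have "H (a mod k) (y (a div k)) = H (a mod k) (y (b div k))" using e unfolding V_def by simp
  then have "y (a div k) = y (b div k)" using Hinj[of "a mod k"] yI kpos
    by (meson inj_onD less_imp_le mod_less_divisor)
  moreover have "a div k < L" "b div k < L" using a b kpos
    by (simp_all add: less_mult_imp_div_less mult.commute)
  ultimately have "a div k = b div k" using y_inj by (meson inj_onD lessThan_iff)
  then show "a = b" using m by (metis div_mult_mod_eq)
qed

lemma vs_len: "length vs = k * L" unfolding vs_def by simp

lemma vs_cycle: "sd_cycle k n A vs"
  unfolding sd_cycle_def
proof (intro conjI allI impI)
  show "vs \<noteq> []" unfolding vs_def using kpos Lpos by simp
  show "distinct vs" unfolding vs_def using V_inj by (simp add: distinct_map)
  fix i assume "i < length vs"
  then have "i < k * L" using vs_len by simp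
  moreover have "(i + 1) mod (k * L) < k * L" using kpos Lpos by simp
  ultimately have "vs ! i = V i" "vs ! ((i + 1) mod length vs) = V (Suc i)"
    unfolding vs_def using V_mod by auto
  then show "sd_edge k n A (vs ! i) (vs ! ((i + 1) mod length vs))" using V_edge by simp
qed

definition e where "e q = sd_edge_sign A (V q) (V (Suc q))"

lemma e_pm: "e q = 1 \<or> e q = -1"
proof -
  have "A (q mod k) $$ (H (q mod k) (y (q div k)), H (Suc (q mod k)) (y (q div k))) \<noteq> 0"
    using Hnz kpos yI by simp
  then show ?thesis unfolding e_def sd_edge_sign_def using V_snd_Suc
    by (simp add: V_def sgn_if)
qed

lemma neg_eq: "sd_neg_edges A vs = card {q\<in>{..<k * L}. e q < 0}"
proof -
  have "{i. i < length vs \<and> sd_edge_sign A (vs ! i) (vs ! ((i + 1) mod length vs)) < 0} = {q\<in>{..<k * L}. e q < 0}"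
  proof (intro Collect_cong)
    fix i
    show "(i < length vs \<and> sd_edge_sign A (vs ! i) (vs ! ((i + 1) mod length vs)) < 0) = (i \<in> {..<k * L} \<and> e i < 0)"
    proof (cases "i < k * L")
      case True
      moreover have "(i + 1) mod (k * L) < k * L" using kpos Lpos by simp
      ultimately have "vs ! i = V i" "vs ! ((i + 1) mod length vs) = V (Suc i)"
        unfolding vs_def using V_mod by auto
      then show ?thesis using True vs_len e_def by simp
    qed (simp add: vs_len)
  qed
  then show ?thesis unfolding sd_neg_edges_def by simp
qed

lemma sign_prod:
  "(\<Prod>i\<in>Q. \<Prod>l<k. sgn (A l $$ (H l i, H (Suc l) i))) = (-1) ^ sd_neg_edges A vs"
proof -
  have "(\<Prod>q<k * L. e q) = (-1) ^ sd_neg_edges A vs"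
    unfolding neg_eq using prod_pm1[of "{..<k*L}" e] e_pm by simp
  moreover have "(\<Prod>q<k * L. e q) = (\<Prod>p<L. \<Prod>l<k. e (p * k + l))"
  proof -
    have "(\<Prod>q<k * L. e q) = (\<Prod>p<L. prod e {p * k..<p * k + k})"
      using prod.nat_group[of e k L] by (simp add: mult.commute)
    also have "\<dots> = (\<Prod>p<L. \<Prod>l<k. e (p * k + l))"
    proof (rule prod.cong[OF refl])
      fix p
      show "prod e {p * k..<p * k + k} = (\<Prod>l<k. e (p * k + l))"
        by (rule prod_shift_block)
    qed
    finally show ?thesis .
  qed
  moreover have "e (p * k + l) = sgn (A l $$ (H l (y p), H (Suc l) (y p)))" if "l < k" for p l
  proof -
    have "(p * k + l) mod k = l" "(p * k + l) div k = p" using that by auto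
    then show ?thesis unfolding e_def sd_edge_sign_def using V_snd_Suc[of "p * k + l"]
      by (simp add: V_def)
  qed
  ultimately have "(\<Prod>p<L. \<Prod>l<k. sgn (A l $$ (H l (y p), H (Suc l) (y p)))) = (-1) ^ sd_neg_edges A vs"
    by simp
  moreover have "(\<Prod>p<L. \<Prod>l<k. sgn (A l $$ (H l (y p), H (Suc l) (y p)))) =
      (\<Prod>i\<in>Q. \<Prod>l<k. sgn (A l $$ (H l i, H (Suc l) i)))"
    using prod.reindex[OF y_inj, of "\<lambda>i. \<Prod>l<k. sgn (A l $$ (H l i, H (Suc l) i))"] y_img by simp
  ultimately show ?thesis by simp
qed

lemma vs_div: "length vs div k = card Q"
  using vs_len kpos L_def by simp

end


lemma pm1_power: "(-1::real) ^ m = 1 \<or> (-1::real) ^ m = -1"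
  by (cases "even m") auto

lemma prod_pm1_gen:
  fixes e :: "'a \<Rightarrow> real"
  assumes "finite S" "\<And>q. q \<in> S \<Longrightarrow> e q = 1 \<or> e q = -1"
  shows "(\<Prod>q\<in>S. e q) = 1 \<or> (\<Prod>q\<in>S. e q) = -1"
proof -
  have "(\<Prod>q\<in>S. e q) = (\<Prod>q\<in>S. if e q < 0 then -1 else 1)"
    using assms(2) by (intro prod.cong refl) force
  also have "\<dots> = (\<Prod>q\<in>{q\<in>S. e q < 0}. -1)"
    using assms(1) by (simp add: prod.If_cases Int_def)
  also have "\<dots> = (-1) ^ card {q\<in>S. e q < 0}" by simp
  finally show ?thesis using pm1_power by simp
qed

lemma qual_setup:
  assumes kpos: "k > 0" and Adim: "\<forall>j<k. A j \<in> carrier_mat (n j) (n ((j + 1) mod k))"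
    and Bq: "\<forall>j<k. B j \<in> qual_class (A j)"
  shows "\<And>l. l < k \<Longrightarrow> B l \<in> carrier_mat (n (l mod k)) (n (Suc l mod k))"
    and "\<And>l r c. l < k \<Longrightarrow> r < n l \<Longrightarrow> c < n (Suc l mod k) \<Longrightarrow> sgn (B l $$ (r, c)) = sgn (A l $$ (r, c))"
proof -
  fix l assume l: "l < k"
  have "A l \<in> carrier_mat (n l) (n (Suc l mod k))" using Adim l by simp
  moreover have "B l \<in> qual_class (A l)" using Bq l by simp
  ultimately show "B l \<in> carrier_mat (n (l mod k)) (n (Suc l mod k))"
    using l unfolding qual_class_def carrier_mat_def by simp
next
  fix l r c assume l: "l < k" and rc: "r < n l" "c < n (Suc l mod k)"
  have "A l \<in> carrier_mat (n l) (n (Suc l mod k))" using Adim l by simp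
  moreover have "B l \<in> qual_class (A l)" using Bq l by simp
  ultimately show "sgn (B l $$ (r, c)) = sgn (A l $$ (r, c))"
    using rc unfolding qual_class_def carrier_mat_def by auto
qed

lemma forward:
  assumes kpos: "k > 0" and Adim: "\<forall>j<k. A j \<in> carrier_mat (n j) (n ((j + 1) mod k))"
    and efree: "e_cycle_free k n A" and Mq: "M \<in> qual_product k n A"
  shows "P0_matrix M"
proof -
  obtain B where MB: "M = chain_prod (n 0) k B" and Bq: "\<forall>j<k. B j \<in> qual_class (A j)"
    using Mq unfolding qual_product_def by blast
  define N where "N l = n (l mod k)" for l
  have Nk: "N k = n 0" unfolding N_def by simp
  have Bdim: "\<And>l. l < k \<Longrightarrow> B l \<in> carrier_mat (N l) (N (Suc l))"
    using qual_setup(1)[OF kpos Adim Bq] unfolding N_def by simp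
  have Bsgn: "\<And>l r c. l < k \<Longrightarrow> r < N l \<Longrightarrow> c < N (Suc l) \<Longrightarrow> sgn (B l $$ (r, c)) = sgn (A l $$ (r, c))"
    using qual_setup(2)[OF kpos Adim Bq] unfolding N_def by simp
  interpret c0: chain k N B "{}" using Bdim by unfold_locales auto
  have MR: "M = c0.R 0" unfolding MB chain_prod_def c0.R_def Nk by simp
  have Mdim: "M \<in> carrier_mat (n 0) (n 0)" using c0.R_dim[of 0] MR Nk unfolding N_def by simp
  show ?thesis unfolding P0_matrix_def
  proof (intro conjI allI impI)
    show "dim_row M = dim_col M" using Mdim by simp
    fix I assume Isub0: "I \<subseteq> {0..<dim_row M}" and Ine: "I \<noteq> {}"
    have Isub: "I \<subseteq> {0..<N k}" using Isub0 Mdim Nk by simp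
    interpret chain k N B I using Bdim Isub by unfold_locales auto
    have MR': "M = R 0" unfolding MB chain_prod_def R_def Nk by simp
    define g0 where "g0 = (\<lambda>i\<in>I. i)"
    have g0I: "g0 \<in> InjS I (N 0)" unfolding InjS_def g0_def using Isub Nk unfolding N_def
      by (auto simp: inj_on_def)
    have "det (submatrix M I I) = Dm M (\<lambda>i. i) I"
      unfolding Dm_def using det_submatrix_perm[OF Mdim] Isub0 Mdim by simp
    also have "\<dots> = Dm (R 0) g0 I" unfolding MR' g0_def by (rule Dm_cong) simp
    also have "\<dots> = (\<Sum>G\<in>Cf 0. W 0 (G(0 := g0)))" using expand[OF _ g0I] by simp
    also have "\<dots> \<ge> 0"
    proof (rule sum_nonneg)
      fix G assume G: "G \<in> Cf 0"
      define H where "H = G(0 := g0)"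
      have HI: "H l \<in> InjS I (N l)" if "l \<le> k" for l
        using G g0I that unfolding H_def Cf_def by (cases "l = 0") auto
      have Hinj: "inj_on (H l) I" if "l \<le> k" for l using HI[OF that] unfolding InjS_def by simp
      have HbdN: "H l i < N l" if "l \<le> k" "i \<in> I" for l i using HI[OF that(1)] that(2) unfolding InjS_def by auto
      have H0: "H 0 i = i" if "i \<in> I" for i using that unfolding H_def g0_def by simp
      have Bnz_A: "A l $$ (H l i, H (Suc l) i) \<noteq> 0" if "l < k" "i \<in> I" "B l $$ (H l i, H (Suc l) i) \<noteq> 0" for l i
      proof -
        have "sgn (B l $$ (H l i, H (Suc l) i)) = sgn (A l $$ (H l i, H (Suc l) i))"
          using Bsgn[OF that(1) HbdN[OF _ that(2)] HbdN[OF _ that(2)]] that(1) by simp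
        then show ?thesis using that(3) by (metis sgn_0_0 sgn_eq_0_iff)
      qed
      have "0 \<le> W 0 H"
      proof (cases "H k ` I = I")
        case False
        then show ?thesis unfolding W_def by simp
      next
        case imgk: True
        show ?thesis
        proof (cases "\<forall>i\<in>I. \<forall>l<k. B l $$ (H l i, H (Suc l) i) \<noteq> 0")
          case False
          then obtain i l where il: "i \<in> I" "l < k" "B l $$ (H l i, H (Suc l) i) = 0" by blast
          have "(\<Prod>l\<in>{0..<k}. B l $$ (H l i, H (Suc l) i)) = 0"
            using il by (intro prod_zero) auto
          then have "(\<Prod>i\<in>I. \<Prod>l\<in>{0..<k}. B l $$ (H l i, H (Suc l) i)) = 0"
            using il fin_I by (intro prod_zero) auto
          then show ?thesis unfolding W_def by simp
        next
          case nz: True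
          define \<sigma> where "\<sigma> = restrict_id (H k) I"
          have bijk: "bij_betw (H k) I I" using imgk Hinj[of k] by (simp add: bij_betw_def)
          have perm: "\<sigma> permutes I" unfolding \<sigma>_def by (rule permutes_restrict_id[OF bijk])
          define s where "s i = (\<Prod>l<k. sgn (B l $$ (H l i, H (Suc l) i)))" for i
          have spm: "\<forall>i\<in>I. s i = 1 \<or> s i = -1"
          proof
            fix i assume i: "i \<in> I"
            show "s i = 1 \<or> s i = -1" unfolding s_def
              by (rule prod_pm1_gen) (use nz i in \<open>auto simp: sgn_if\<close>)
          qed
          have hyp: "\<forall>Q. minorb \<sigma> I Q \<longrightarrow> (\<Prod>x\<in>Q. s x) = (-1) ^ (card Q - 1)"
          proof (intro allI impI)
            fix Q assume mQ: "minorb \<sigma> I Q"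
            obtain x where xQ: "x \<in> Q" using minorbD(1)[OF mQ] by blast
            have QI: "Q \<subseteq> I" using minorbD(2)[OF mQ] .
            interpret cyc k n A H \<sigma> I Q x
            proof (unfold_locales)
              show "k > 0" "finite I" "\<sigma> permutes I" "minorb \<sigma> I Q" "x \<in> Q" using kpos fin_I perm mQ xQ by auto
              show "\<And>l. l \<le> k \<Longrightarrow> inj_on (H l) I" by (rule Hinj)
              show "H l i < n l" if "l < k" "i \<in> I" for l i using HbdN[of l i] that unfolding N_def by simp
              show "\<And>i. i \<in> I \<Longrightarrow> H 0 i = i" by (rule H0)
              show "\<And>i. i \<in> I \<Longrightarrow> H k i = \<sigma> i" unfolding \<sigma>_def by simp
              show "\<And>l i. l < k \<Longrightarrow> i \<in> I \<Longrightarrow> A l $$ (H l i, H (Suc l) i) \<noteq> 0"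
                using Bnz_A nz by blast
            qed
            have "(\<Prod>x\<in>Q. s x) = (\<Prod>i\<in>Q. \<Prod>l<k. sgn (A l $$ (H l i, H (Suc l) i)))"
              unfolding s_def
            proof (intro prod.cong refl)
              fix i l assume "i \<in> Q" "l \<in> {..<k}"
              then show "sgn (B l $$ (H l i, H (Suc l) i)) = sgn (A l $$ (H l i, H (Suc l) i))"
                using Bsgn HbdN QI by auto
            qed
            also have "\<dots> = (-1) ^ sd_neg_edges A vs" by (rule sign_prod)
            finally have ps: "(\<Prod>x\<in>Q. s x) = (-1) ^ sd_neg_edges A vs" .
            have "\<not> sd_e_cycle k n A vs" using efree unfolding e_cycle_free_def by blast
            then have "(-1::int) ^ (card Q + sd_neg_edges A vs) \<noteq> 1"
              using vs_cycle vs_div unfolding sd_e_cycle_def by simp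
            then have odd: "odd (card Q + sd_neg_edges A vs)" using neg_one_even_power by blast
            have cQ: "card Q \<ge> 1" using Lpos L_def by simp
            have "even (sd_neg_edges A vs) = even (card Q - 1)" using odd cQ by presburger
            then have "(-1::real) ^ sd_neg_edges A vs = (-1) ^ (card Q - 1)"
              by (simp add: minus_one_power_iff)
            then show "(\<Prod>x\<in>Q. s x) = (-1) ^ (card Q - 1)" using ps by simp
          qed
          have cs: "of_int (sign \<sigma>) * (\<Prod>x\<in>I. s x) = 1"
            by (rule core_sign[OF fin_I perm spm hyp])
          have "(\<Prod>i\<in>I. \<Prod>l\<in>{0..<k}. B l $$ (H l i, H (Suc l) i)) =
              (\<Prod>i\<in>I. s i * (\<Prod>l\<in>{0..<k}. \<bar>B l $$ (H l i, H (Suc l) i)\<bar>))"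
            unfolding s_def lessThan_atLeast0 prod.distrib[symmetric]
            by (intro prod.cong refl) (simp add: sgn_mult_abs)
          also have "\<dots> = (\<Prod>i\<in>I. s i) * (\<Prod>i\<in>I. \<Prod>l\<in>{0..<k}. \<bar>B l $$ (H l i, H (Suc l) i)\<bar>)"
            by (rule prod.distrib)
          finally have "W 0 H = (of_int (sign \<sigma>) * (\<Prod>x\<in>I. s x)) * (\<Prod>i\<in>I. \<Prod>l\<in>{0..<k}. \<bar>B l $$ (H l i, H (Suc l) i)\<bar>)"
            unfolding W_def \<sigma>_def using imgk by simp
          then show ?thesis unfolding cs by (simp add: prod_nonneg)
        qed
      qed
      then show "0 \<le> W 0 (G(0 := g0))" unfolding H_def .
    qed
    finally show "0 \<le> det (submatrix M I I)" .
  qed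
qed


lemma inv_shift: "i < (m::nat) \<Longrightarrow> ((c + i) mod m + (m - c mod m)) mod m = i"
proof -
  assume i: "i < m"
  then have mp: "m > 0" by simp
  have "c mod m \<le> m" using mp by (simp add: less_imp_le)
  have "((c + i) mod m + (m - c mod m)) mod m = (c + i + (m - c mod m)) mod m" by (simp add: mod_simps)
  also have "c + i + (m - c mod m) = i + m + c div m * m"
    using \<open>c mod m \<le> m\<close> div_mult_mod_eq[of c m] by linarith
  also have "(i + m + c div m * m) mod m = i" using i by simp
  finally show ?thesis .
qed

lemma inv_shift2: "j < (m::nat) \<Longrightarrow> (c + (j + (m - c mod m)) mod m) mod m = j"
proof -
  assume j: "j < m"
  then have mp: "m > 0" by simp
  have "c mod m \<le> m" using mp by (simp add: less_imp_le)
  have "(c + (j + (m - c mod m)) mod m) mod m = (c + j + (m - c mod m)) mod m" by (simp add: mod_add_right_eq add.assoc)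
  also have "c + j + (m - c mod m) = j + m + c div m * m"
    using \<open>c mod m \<le> m\<close> div_mult_mod_eq[of c m] by linarith
  also have "(j + m + c div m * m) mod m = j" using j by simp
  finally show ?thesis .
qed

lemma shift_inj: "inj_on (\<lambda>i. (c + i) mod m) {..<(m::nat)}"
proof
  fix i j assume "i \<in> {..<m}" "j \<in> {..<m}" "(c + i) mod m = (c + j) mod m"
  then show "i = j" using inv_shift[of i m c] inv_shift[of j m c] by simp
qed

lemma card_shift: "card {i\<in>{..<(m::nat)}. P ((c + i) mod m)} = card {j\<in>{..<m}. P j}"
proof (rule bij_betw_same_card[of "\<lambda>i. (c + i) mod m"])
  show "bij_betw (\<lambda>i. (c + i) mod m) {i \<in> {..<m}. P ((c + i) mod m)} {j \<in> {..<m}. P j}"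
    unfolding bij_betw_def
  proof
    show "inj_on (\<lambda>i. (c + i) mod m) {i \<in> {..<m}. P ((c + i) mod m)}"
      using shift_inj by (rule inj_on_subset) auto
    show "(\<lambda>i. (c + i) mod m) ` {i \<in> {..<m}. P ((c + i) mod m)} = {j \<in> {..<m}. P j}"
    proof
      show "(\<lambda>i. (c + i) mod m) ` {i \<in> {..<m}. P ((c + i) mod m)} \<subseteq> {j \<in> {..<m}. P j}"
        by auto
      show "{j \<in> {..<m}. P j} \<subseteq> (\<lambda>i. (c + i) mod m) ` {i \<in> {..<m}. P ((c + i) mod m)}"
      proof
        fix j assume j: "j \<in> {j \<in> {..<m}. P j}"
        then have jm: "j < m" by simp
        then have "m > 0" by simp
        define i where "i = (j + (m - c mod m)) mod m"
        have "(c + i) mod m = j" unfolding i_def using inv_shift2[OF jm] .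
        moreover have "i < m" unfolding i_def using \<open>m > 0\<close> by simp
        ultimately show "j \<in> (\<lambda>i. (c + i) mod m) ` {i \<in> {..<m}. P ((c + i) mod m)}"
          using j by (intro image_eqI[of _ _ i]) auto
      qed
    qed
  qed
qed

lemma rotate_cycle:
  assumes cyc: "sd_cycle k n A vs"
  shows "sd_cycle k n A (rotate r vs)" "sd_neg_edges A (rotate r vs) = sd_neg_edges A vs"
    "length (rotate r vs) = length vs"
proof -
  define m where "m = length vs"
  have mpos: "m > 0" using cyc unfolding sd_cycle_def m_def by simp
  have nth: "rotate r vs ! i = vs ! ((r + i) mod m)" if "i < m" for i
    using that nth_rotate[of i vs r] unfolding m_def by simp
  have nxt: "rotate r vs ! ((i + 1) mod m) = vs ! (((r + i) mod m + 1) mod m)" if "i < m" for i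
  proof -
    have "(i + 1) mod m < m" using mpos by simp
    then have "rotate r vs ! ((i + 1) mod m) = vs ! ((r + (i + 1) mod m) mod m)" using nth by simp
    also have "(r + (i + 1) mod m) mod m = ((r + i) mod m + 1) mod m" by (simp add: mod_simps)
    finally show ?thesis .
  qed
  show len: "length (rotate r vs) = length vs" by simp
  show "sd_cycle k n A (rotate r vs)"
    unfolding sd_cycle_def
  proof (intro conjI allI impI)
    show "rotate r vs \<noteq> []" using mpos m_def by auto
    show "distinct (rotate r vs)" using cyc unfolding sd_cycle_def by simp
    fix i assume "i < length (rotate r vs)"
    then have i: "i < m" using m_def by simp
    have "(r + i) mod m < length vs" using mpos m_def by simp
    then have "sd_edge k n A (vs ! ((r + i) mod m)) (vs ! (((r + i) mod m + 1) mod m))"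
      using cyc unfolding sd_cycle_def m_def by blast
    then show "sd_edge k n A (rotate r vs ! i) (rotate r vs ! ((i + 1) mod length (rotate r vs)))"
      using nth[OF i] nxt[OF i] m_def by simp
  qed
  define P where "P j = (sd_edge_sign A (vs ! j) (vs ! ((j + 1) mod m)) < 0)" for j
  have "sd_neg_edges A (rotate r vs) = card {i\<in>{..<m}. P ((r + i) mod m)}"
    unfolding sd_neg_edges_def
  proof (intro arg_cong[where f=card] Collect_cong)
    fix i
    show "(i < length (rotate r vs) \<and> sd_edge_sign A (rotate r vs ! i) (rotate r vs ! ((i + 1) mod length (rotate r vs))) < 0) =
      (i \<in> {..<m} \<and> P ((r + i) mod m))"
    proof (cases "i < m")
      case True
      have lr: "length (rotate r vs) = m" using m_def by simp
      show ?thesis unfolding lr P_def using True by (simp only: nth[OF True] nxt[OF True] lessThan_iff simp_thms)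
    qed (simp add: m_def)
  qed
  also have "\<dots> = card {j\<in>{..<m}. P j}" by (rule card_shift)
  also have "\<dots> = sd_neg_edges A vs" unfolding sd_neg_edges_def P_def m_def
    by (intro arg_cong[where f=card]) auto
  finally show "sd_neg_edges A (rotate r vs) = sd_neg_edges A vs" .
qed


locale ecyc =
  fixes k :: nat and n :: "nat \<Rightarrow> nat" and A :: "nat \<Rightarrow> real mat" and vs :: "(nat \<times> nat) list"
  assumes kpos: "k > 0" and cyc: "sd_cycle k n A vs" and st: "fst (vs ! 0) = 0"
begin

definition m where "m = length vs"
definition U where "U q = vs ! (q mod m)"

lemma mpos: "m > 0" using cyc unfolding sd_cycle_def m_def by simp

lemma U_mod: "U (q mod m) = U q" unfolding U_def by simp

lemma U_edge: "sd_edge k n A (U q) (U (Suc q))"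
proof -
  have "q mod m < length vs" using mpos m_def by simp
  then have "sd_edge k n A (vs ! (q mod m)) (vs ! ((q mod m + 1) mod length vs))"
    using cyc unfolding sd_cycle_def by blast
  then show ?thesis unfolding U_def m_def[symmetric] by (simp add: mod_Suc_eq)
qed

lemma U_fst: "fst (U q) = q mod k"
proof (induction q)
  case 0 then show ?case using st mpos unfolding U_def by simp
next
  case (Suc q)
  have "fst (U (Suc q)) = (fst (U q) + 1) mod k" using U_edge[of q] unfolding sd_edge_def by simp
  then show ?case using Suc by (simp add: mod_Suc_eq)
qed

lemma U_vertex: "sd_vertex k n (U q)" using U_edge unfolding sd_edge_def by blast

lemma kdvd: "m mod k = 0"
proof -
  have "U m = U 0" using U_mod[of m] by simp
  then show ?thesis using U_fst[of m] U_fst[of 0] by simp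
qed

definition L where "L = m div k"
lemma mkL: "m = k * L" unfolding L_def using kdvd by (metis mult_div_mod_eq add_0_right mult.commute)
lemma Lpos: "L > 0" using mpos mkL by (cases L) auto

definition x where "x p = snd (U (k * p))" for p
lemma U_x: "U (k * p) = (0, x p)" using U_fst[of "k * p"] unfolding x_def by (metis mod_mult_self1_is_0 prod.collapse)

lemma U_inj: "inj_on U {..<m}"
proof
  fix a b assume "a \<in> {..<m}" "b \<in> {..<m}" "U a = U b"
  then show "a = b" using cyc unfolding U_def m_def sd_cycle_def by (simp add: nth_eq_iff_index_eq)
qed

lemma kpL: "p < L \<Longrightarrow> l < k \<Longrightarrow> k * p + l < m"
proof -
  assume "p < L" "l < k"
  then have "k * p + l < k * p + k" by simp
  also have "\<dots> = k * Suc p" by simp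
  also have "\<dots> \<le> k * L" using \<open>p < L\<close> by (intro mult_le_mono2) simp
  finally show ?thesis using mkL by simp
qed

lemma x_inj: "inj_on x {..<L}"
proof
  fix a b assume a: "a \<in> {..<L}" and b: "b \<in> {..<L}" and e: "x a = x b"
  then have "U (k * a) = U (k * b)" using U_x by simp
  moreover have "k * a \<in> {..<m}" "k * b \<in> {..<m}" using kpL[of a 0] kpL[of b 0] a b kpos by auto
  ultimately have "k * a = k * b" using U_inj by (meson inj_onD)
  then show "a = b" using kpos by simp
qed

definition I where "I = x ` {..<L}"
lemma finI: "finite I" unfolding I_def by simp
lemma cardI: "card I = L" unfolding I_def using card_image[OF x_inj] by simp
lemma x0I: "x 0 \<in> I" unfolding I_def using Lpos by simp
lemma I_bound: "I \<subseteq> {0..<n 0}"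
proof
  fix i assume "i \<in> I"
  then obtain p where "i = x p" unfolding I_def by auto
  then show "i \<in> {0..<n 0}" using U_vertex[of "k * p"] U_x[of p] unfolding sd_vertex_def by simp
qed

definition ix where "ix = inv_into {..<L} x"
lemma ix_x: "p < L \<Longrightarrow> ix (x p) = p" unfolding ix_def using x_inj by (simp add: inv_into_f_f)
lemma x_ix: "i \<in> I \<Longrightarrow> x (ix i) = i" unfolding ix_def I_def by (simp add: f_inv_into_f)
lemma ix_lt: "i \<in> I \<Longrightarrow> ix i < L" unfolding ix_def I_def by (metis inv_into_into lessThan_iff)

definition H where "H l = (\<lambda>i\<in>I. snd (U (k * ix i + l)))" for l

lemma H_U: "i \<in> I \<Longrightarrow> H l i = snd (U (k * ix i + l))" unfolding H_def by simp

lemma H0: "i \<in> I \<Longrightarrow> H 0 i = i" using H_U[of i 0] x_ix U_x by (metis add_0_right snd_conv)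
lemma H0_eq: "H 0 = (\<lambda>i\<in>I. i)" unfolding H_def using H0 H_U by (auto simp: fun_eq_iff)

lemma U_kSuc: "U (k * Suc a) = U (k * (Suc a mod L))"
proof -
  have "k * Suc a mod m = k * (Suc a mod L)" unfolding mkL by (rule mod_mult_mult1)
  then show ?thesis using U_mod[of "k * Suc a"] by simp
qed

lemma Hk: "i \<in> I \<Longrightarrow> H k i = x (Suc (ix i) mod L)"
proof -
  assume i: "i \<in> I"
  have "k * ix i + k = k * Suc (ix i)" by simp
  then have "U (k * ix i + k) = (0, x (Suc (ix i) mod L))" using U_kSuc[of "ix i"] U_x by metis
  then show ?thesis using H_U[OF i, of k] by simp
qed

lemma HkI: "i \<in> I \<Longrightarrow> H k i \<in> I" using Hk Lpos unfolding I_def by simp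

lemma H_bd: "i \<in> I \<Longrightarrow> H l i < n (l mod k)"
proof -
  assume i: "i \<in> I"
  have "snd (U (k * ix i + l)) < n (fst (U (k * ix i + l)))" using U_vertex unfolding sd_vertex_def by blast
  then show ?thesis using H_U[OF i] U_fst by simp
qed

lemma Hinj: "l \<le> k \<Longrightarrow> inj_on (H l) I"
proof (cases "l = k")
  case True
  show ?thesis
  proof
    fix i j assume i: "i \<in> I" and j: "j \<in> I" and e: "H l i = H l j"
    then have "x (Suc (ix i) mod L) = x (Suc (ix j) mod L)" using Hk True by simp
    then have "Suc (ix i) mod L = Suc (ix j) mod L" using x_inj Lpos by (meson inj_onD lessThan_iff mod_less_divisor)
    then have "ix i = ix j" using inv_shift[of "ix i" L 1] inv_shift[of "ix j" L 1] ix_lt i j by simp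
    then show "i = j" using x_ix i j by metis
  qed
next
  case False
  assume "l \<le> k"
  with False have lk: "l < k" by simp
  show ?thesis
  proof
    fix i j assume i: "i \<in> I" and j: "j \<in> I" and e: "H l i = H l j"
    have "fst (U (k * ix i + l)) = fst (U (k * ix j + l))" using U_fst lk by simp
    moreover have "snd (U (k * ix i + l)) = snd (U (k * ix j + l))" using e H_U i j by simp
    ultimately have "U (k * ix i + l) = U (k * ix j + l)" by (simp add: prod_eq_iff)
    moreover have "k * ix i + l \<in> {..<m}" "k * ix j + l \<in> {..<m}" using kpL ix_lt i j lk by auto
    ultimately have "k * ix i + l = k * ix j + l" using U_inj by (meson inj_onD)
    then have "ix i = ix j" using kpos by simp
    then show "i = j" using x_ix i j by metis
  qed
qed

lemma Hnz: "l < k \<Longrightarrow> i \<in> I \<Longrightarrow> A l $$ (H l i, H (Suc l) i) \<noteq> 0"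
proof -
  assume lk: "l < k" and i: "i \<in> I"
  have "A (fst (U (k * ix i + l))) $$ (snd (U (k * ix i + l)), snd (U (Suc (k * ix i + l)))) \<noteq> 0"
    using U_edge unfolding sd_edge_def by blast
  then show ?thesis using H_U[OF i] U_fst lk by simp
qed

definition \<sigma> where "\<sigma> = restrict_id (H k) I"

lemma bijk: "bij_betw (H k) I I"
proof -
  have inj: "inj_on (H k) I" using Hinj by simp
  have sub: "H k ` I \<subseteq> I" using HkI by auto
  have "card (H k ` I) = card I" using card_image[OF inj] .
  then have "H k ` I = I" using card_subset_eq[OF finI sub] by simp
  then show ?thesis using inj unfolding bij_betw_def by simp
qed

lemma perm: "\<sigma> permutes I" unfolding \<sigma>_def by (rule permutes_restrict_id[OF bijk])

lemma \<sigma>_x: "p < L \<Longrightarrow> \<sigma> (x p) = x (Suc p mod L)"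
proof -
  assume p: "p < L"
  have "x p \<in> I" unfolding I_def using p by simp
  then show ?thesis unfolding \<sigma>_def using Hk ix_x[OF p] by simp
qed

lemma \<sigma>_pow: "j < L \<Longrightarrow> (\<sigma> ^^ p) (x j) = x ((j + p) mod L)"
proof (induction p)
  case 0 then show ?case by simp
next
  case (Suc p)
  have "(\<sigma> ^^ Suc p) (x j) = \<sigma> (x ((j + p) mod L))" using Suc by simp
  also have "\<dots> = x (Suc ((j + p) mod L) mod L)" using \<sigma>_x Lpos by simp
  also have "\<dots> = x ((j + Suc p) mod L)" by (simp add: mod_Suc_eq)
  finally show ?case .
qed

lemma mI: "minorb \<sigma> I I"
  unfolding minorb_def
proof (intro conjI allI impI)
  show "I \<noteq> {}" using x0I by auto
  show "I \<subseteq> I" by simp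
  show "\<sigma> ` I \<subseteq> I" using permutes_image[OF perm] by simp
  fix Q assume Q: "Q \<subseteq> I" "Q \<noteq> {}" "\<sigma> ` Q \<subseteq> Q"
  obtain w where w: "w \<in> Q" using Q(2) by blast
  then obtain j where j: "j < L" "w = x j" using Q(1) unfolding I_def by auto
  have inQ: "(\<sigma> ^^ p) w \<in> Q" for p
  proof (induction p)
    case (Suc p) then show ?case using Q(3) by auto
  qed (simp add: w)
  have "x t \<in> Q" if "t < L" for t
  proof -
    have "(j + (t + L - j)) mod L = t" using that j by simp
    then show ?thesis using inQ[of "t + L - j"] \<sigma>_pow[OF j(1)] j(2) by simp
  qed
  then have "I \<subseteq> Q" unfolding I_def by auto
  then show "Q = I" using Q(1) by simp
qed

lemma mQ_eq: "minorb \<sigma> I Q \<Longrightarrow> Q = I"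
  using minorbD(4)[OF mI] minorbD(1-3)[of \<sigma> I Q] by blast

sublocale cy: cyc k n A H \<sigma> I I "x 0"
proof
  show "k > 0" by (rule kpos)
  show "finite I" by (rule finI)
  show "\<sigma> permutes I" by (rule perm)
  show "minorb \<sigma> I I" by (rule mI)
  show "x 0 \<in> I" by (rule x0I)
  show "\<And>l. l \<le> k \<Longrightarrow> inj_on (H l) I" by (rule Hinj)
  show "H l i < n l" if "l < k" "i \<in> I" for l i using H_bd[OF that(2), of l] that(1) by simp
  show "\<And>i. i \<in> I \<Longrightarrow> H 0 i = i" by (rule H0)
  show "\<And>i. i \<in> I \<Longrightarrow> H k i = \<sigma> i" unfolding \<sigma>_def by simp
  show "\<And>l i. l < k \<Longrightarrow> i \<in> I \<Longrightarrow> A l $$ (H l i, H (Suc l) i) \<noteq> 0" by (rule Hnz)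
qed

lemma V_eq: "cy.V q = U q"
proof -
  have y: "cy.y p = x (p mod L)" for p unfolding cy.y_def using \<sigma>_pow[of 0 p] Lpos by simp
  have xI: "x (q div k mod L) \<in> I" unfolding I_def using Lpos by simp
  have "H (q mod k) (x (q div k mod L)) = snd (U (k * (q div k mod L) + q mod k))"
    using H_U[OF xI] ix_x Lpos by simp
  also have "k * (q div k mod L) + q mod k = q mod m" unfolding mkL by (simp add: mod_mult2_eq)
  finally have "H (q mod k) (x (q div k mod L)) = snd (U q)" using U_mod by simp
  then show ?thesis unfolding cy.V_def y using U_fst by (simp add: prod_eq_iff)
qed

lemma vs_eq: "cy.vs = vs"
proof -
  have "cy.L = L" unfolding cy.L_def using cardI .
  then have "cy.vs = map U [0..<m]" unfolding cy.vs_def mkL using V_eq by simp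
  also have "\<dots> = vs" unfolding U_def m_def by (rule nth_equalityI) auto
  finally show ?thesis .
qed

lemma sign_cycle: "(\<Prod>i\<in>I. \<Prod>l<k. sgn (A l $$ (H l i, H (Suc l) i))) = (-1) ^ sd_neg_edges A vs"
  using cy.sign_prod vs_eq by simp

end


context chain
begin
lemma W_cong: "(\<And>l. l \<le> k \<Longrightarrow> H1 l = H2 l) \<Longrightarrow> W j H1 = W j H2"
  unfolding W_def by (intro arg_cong2[where f="(*)"] prod.cong refl) auto
end

lemma prod_le_eps:
  fixes f :: "'a \<Rightarrow> real"
  assumes "finite S" "\<And>x. x \<in> S \<Longrightarrow> 0 \<le> f x \<and> f x \<le> 1" "xz \<in> S" "f xz \<le> \<epsilon>"
  shows "prod f S \<le> \<epsilon>"
proof -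
  have "prod f S = f xz * prod f (S - {xz})" using assms(1,3) by (simp add: prod.remove)
  also have "\<dots> \<le> \<epsilon> * 1"
  proof (rule mult_mono)
    show "f xz \<le> \<epsilon>" by fact
    show "prod f (S - {xz}) \<le> 1" using assms(2) by (intro prod_le_1) auto
    show "0 \<le> \<epsilon>" using assms(2)[OF assms(3)] assms(4) by simp
    show "0 \<le> prod f (S - {xz})" using assms(2) by (intro prod_nonneg) auto
  qed
  finally show ?thesis by simp
qed

lemma level0_exists:
  assumes kpos: "k > 0" and cyc: "sd_cycle k n A vs"
  shows "\<exists>q<length vs. fst (vs ! q) = 0"
proof -
  define m where "m = length vs"
  have mpos: "m > 0" using cyc unfolding sd_cycle_def m_def by simp
  define W where "W q = vs ! (q mod m)" for q
  have edge: "sd_edge k n A (W q) (W (Suc q))" for q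
  proof -
    have "q mod m < length vs" using mpos m_def by simp
    then have "sd_edge k n A (vs ! (q mod m)) (vs ! ((q mod m + 1) mod length vs))"
      using cyc unfolding sd_cycle_def by blast
    then show ?thesis unfolding W_def m_def[symmetric] by (simp add: mod_Suc_eq)
  qed
  have lv: "fst (W q) = (fst (W 0) + q) mod k" for q
  proof (induction q)
    case 0 then show ?case using edge[of 0] unfolding sd_edge_def sd_vertex_def by simp
  next
    case (Suc q)
    have "fst (W (Suc q)) = (fst (W q) + 1) mod k" using edge[of q] unfolding sd_edge_def by simp
    then show ?case using Suc by (simp add: mod_Suc_eq)
  qed
  have l0: "fst (W 0) < k" using edge[of 0] unfolding sd_edge_def sd_vertex_def by simp
  have "fst (W (k - fst (W 0))) = 0" using lv[of "k - fst (W 0)"] l0 by simp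
  moreover have "(k - fst (W 0)) mod m < length vs" using mpos m_def by simp
  ultimately show ?thesis unfolding W_def by blast
qed

context ecyc
begin

lemma sign_neg:
  assumes par: "(-1::int) ^ (length vs div k + sd_neg_edges A vs) = 1"
  shows "of_int (sign \<sigma>) * (\<Prod>i\<in>I. \<Prod>l<k. sgn (A l $$ (H l i, H (Suc l) i))) = -1"
proof -
  define s where "s i = (\<Prod>l<k. sgn (A l $$ (H l i, H (Suc l) i)))" for i
  have spm: "\<forall>i\<in>I. s i = 1 \<or> s i = -1"
  proof
    fix i assume i: "i \<in> I"
    show "s i = 1 \<or> s i = -1" unfolding s_def
      by (rule prod_pm1_gen) (use Hnz i in \<open>auto simp: sgn_if\<close>)
  qed
  have ldiv: "length vs div k = L" using mkL kpos unfolding m_def by simp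
  have ev: "even (L + sd_neg_edges A vs)"
  proof (rule ccontr)
    assume "odd (L + sd_neg_edges A vs)"
    then have "(-1::int) ^ (L + sd_neg_edges A vs) = -1" by simp
    then show False using par ldiv by simp
  qed
  have ps: "(\<Prod>i\<in>I. s i) = (-1) ^ sd_neg_edges A vs" unfolding s_def by (rule sign_cycle)
  have "even (sd_neg_edges A vs) = even L" using ev by presburger
  then have psL: "(\<Prod>i\<in>I. s i) = (-1) ^ L" using ps by (simp add: minus_one_power_iff)
  define s' where "s' = s(x 0 := - s (x 0))"
  have spm': "\<forall>i\<in>I. s' i = 1 \<or> s' i = -1" using spm x0I unfolding s'_def by auto
  have ps': "(\<Prod>i\<in>I. s' i) = - (\<Prod>i\<in>I. s i)"
  proof -
    have "(\<Prod>i\<in>I. s' i) = s' (x 0) * (\<Prod>i\<in>I - {x 0}. s' i)" using x0I finI by (simp add: prod.remove)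
    also have "(\<Prod>i\<in>I - {x 0}. s' i) = (\<Prod>i\<in>I - {x 0}. s i)" unfolding s'_def by (intro prod.cong) auto
    also have "s' (x 0) = - s (x 0)" unfolding s'_def by simp
    also have "(\<Prod>i\<in>I. s i) = s (x 0) * (\<Prod>i\<in>I - {x 0}. s i)" using x0I finI by (simp add: prod.remove)
    ultimately show ?thesis by simp
  qed
  have hyp: "\<forall>Q. minorb \<sigma> I Q \<longrightarrow> (\<Prod>x\<in>Q. s' x) = (-1) ^ (card Q - 1)"
  proof (intro allI impI)
    fix Q assume "minorb \<sigma> I Q"
    then have QI: "Q = I" by (rule mQ_eq)
    obtain d where d: "L = Suc d" using Lpos by (cases L) auto
    show "(\<Prod>x\<in>Q. s' x) = (-1) ^ (card Q - 1)" unfolding QI cardI ps' psL d by simp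
  qed
  have "of_int (sign \<sigma>) * (\<Prod>x\<in>I. s' x) = 1" by (rule core_sign[OF finI perm spm' hyp])
  then show ?thesis unfolding ps' s_def by simp
qed

end


lemma backward:
  assumes kpos: "k > 0" and Adim: "\<forall>j<k. A j \<in> carrier_mat (n j) (n ((j + 1) mod k))"
    and ncf: "\<not> e_cycle_free k n A"
  shows "\<exists>M \<in> qual_product k n A. \<not> P0_matrix M"
proof -
  obtain vs0 where ec: "sd_e_cycle k n A vs0" using ncf unfolding e_cycle_free_def by blast
  have cyc0: "sd_cycle k n A vs0" and par0: "(-1::int) ^ (length vs0 div k + sd_neg_edges A vs0) = 1"
    using ec unfolding sd_e_cycle_def by auto
  obtain q where q: "q < length vs0" "fst (vs0 ! q) = 0" using level0_exists[OF kpos cyc0] by blast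
  define vs where "vs = rotate q vs0"
  have cyc: "sd_cycle k n A vs" and par: "(-1::int) ^ (length vs div k + sd_neg_edges A vs) = 1"
    using rotate_cycle[OF cyc0, of q] par0 unfolding vs_def by auto
  have "vs0 \<noteq> []" using q by auto
  then have st: "fst (vs ! 0) = 0" unfolding vs_def using q nth_rotate[of 0 vs0 q] by simp
  interpret ecyc k n A vs using kpos cyc st by unfold_locales
  define N where "N l = n (l mod k)" for l
  have Nk: "N k = n 0" unfolding N_def by simp
  define C where "C = PiE {Suc 0..k} (\<lambda>l. InjS I (N l))"
  have finC: "finite C" unfolding C_def using finite_InjS[OF finI] by (intro finite_PiE) auto
  define Gc where "Gc = (\<lambda>l\<in>{Suc 0..k}. H l)"
  have HInj: "H l \<in> InjS I (N l)" if "l \<le> k" for l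
    unfolding InjS_def N_def using Hinj[OF that] H_bd by (auto simp: H_def)
  have GcC: "Gc \<in> C" unfolding Gc_def C_def using HInj by auto
  define \<epsilon> where "\<epsilon> = 1 / (real (card C) + 1)"
  have epos: "\<epsilon> > 0" "\<epsilon> \<le> 1" unfolding \<epsilon>_def by (auto simp: field_simps)
  have ecard: "real (card C) * \<epsilon> < 1" unfolding \<epsilon>_def by (simp add: field_simps)
  define cyc_e where "cyc_e l r c \<longleftrightarrow> (\<exists>i\<in>I. H l i = r \<and> H (Suc l) i = c)" for l r c
  define B where "B l = mat (n l) (n (Suc l mod k)) (\<lambda>(r, c). sgn (A l $$ (r, c)) * (if cyc_e l r c then 1 else \<epsilon>))" for l
  have Bent: "B l $$ (r, c) = sgn (A l $$ (r, c)) * (if cyc_e l r c then 1 else \<epsilon>)"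
    if "r < n l" "c < n (Suc l mod k)" for l r c
    unfolding B_def using that by simp
  have Bq: "\<forall>j<k. B j \<in> qual_class (A j)"
  proof (intro allI impI)
    fix j assume j: "j < k"
    have Aj: "A j \<in> carrier_mat (n j) (n (Suc j mod k))" using Adim j by simp
    show "B j \<in> qual_class (A j)"
      unfolding qual_class_def
    proof (intro CollectI conjI allI impI)
      show "dim_row (B j) = dim_row (A j)" "dim_col (B j) = dim_col (A j)" using Aj unfolding B_def by auto
      fix r c assume "r < dim_row (A j)" "c < dim_col (A j)"
      then have rc: "r < n j" "c < n (Suc j mod k)" using Aj by auto
      have "(if cyc_e j r c then 1 else \<epsilon>) > 0" using epos by simp
      then show "sgn (B j $$ (r, c)) = sgn (A j $$ (r, c))"
        unfolding Bent[OF rc] by (simp add: sgn_mult)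
    qed
  qed
  define M where "M = chain_prod (n 0) k B"
  have Mq: "M \<in> qual_product k n A" unfolding qual_product_def M_def using Bq by blast
  have Bdim: "\<And>l. l < k \<Longrightarrow> B l \<in> carrier_mat (N l) (N (Suc l))"
    using qual_setup(1)[OF kpos Adim Bq] unfolding N_def by simp
  have Isub: "I \<subseteq> {0..<N k}" using I_bound Nk by simp
  interpret chain k N B I using Bdim Isub by unfold_locales auto
  have MR: "M = R 0" unfolding M_def chain_prod_def R_def Nk by simp
  have Mdim: "M \<in> carrier_mat (n 0) (n 0)" using R_dim[of 0] MR Nk unfolding N_def by simp
  define g0 where "g0 = (\<lambda>i\<in>I. i)"
  have g0I: "g0 \<in> InjS I (N 0)" unfolding InjS_def g0_def using Isub Nk unfolding N_def
    by (auto simp: inj_on_def)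
  have Isub0: "I \<subseteq> {0..<dim_row M}" using Mdim I_bound by simp
  have CfC: "Cf 0 = C" unfolding Cf_def C_def by simp
  have dexp: "det (submatrix M I I) = (\<Sum>G\<in>C. W 0 (G(0 := g0)))"
  proof -
    have "det (submatrix M I I) = Dm M (\<lambda>i. i) I"
      unfolding Dm_def using det_submatrix_perm[OF Mdim] Isub0 Mdim by simp
    also have "\<dots> = Dm (R 0) g0 I" unfolding MR g0_def by (rule Dm_cong) simp
    also have "\<dots> = (\<Sum>G\<in>Cf 0. W 0 (G(0 := g0)))" using expand[OF _ g0I] by simp
    finally show ?thesis unfolding CfC .
  qed
  have Bcyc: "B l $$ (H l i, H (Suc l) i) = sgn (A l $$ (H l i, H (Suc l) i))" if "l < k" "i \<in> I" for l i
  proof -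
    have "H l i < n l" using H_bd[OF that(2), of l] that(1) by simp
    moreover have "H (Suc l) i < n (Suc l mod k)" using H_bd[OF that(2), of "Suc l"] by simp
    moreover have "cyc_e l (H l i) (H (Suc l) i)" unfolding cyc_e_def using that(2) by blast
    ultimately show ?thesis using Bent by simp
  qed
  have T1: "W 0 (Gc(0 := g0)) = -1"
  proof -
    have "W 0 (Gc(0 := g0)) = W 0 H"
    proof (rule W_cong)
      fix l assume "l \<le> k"
      then show "(Gc(0 := g0)) l = H l" unfolding Gc_def g0_def using H0_eq by (cases "l = 0") auto
    qed
    also have "\<dots> = of_int (sign \<sigma>) * (\<Prod>i\<in>I. \<Prod>l<k. sgn (A l $$ (H l i, H (Suc l) i)))"
    proof -
      have img: "H k ` I = I" using bijk unfolding bij_betw_def by simp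
      have "(\<Prod>i\<in>I. \<Prod>l\<in>{0..<k}. B l $$ (H l i, H (Suc l) i)) = (\<Prod>i\<in>I. \<Prod>l<k. sgn (A l $$ (H l i, H (Suc l) i)))"
        unfolding lessThan_atLeast0 by (intro prod.cong refl) (simp add: Bcyc)
      then show ?thesis unfolding W_def \<sigma>_def using img by simp
    qed
    also have "\<dots> = -1" using sign_neg[OF par] .
    finally show ?thesis .
  qed
  have T2: "W 0 (G(0 := g0)) \<le> \<epsilon>" if G: "G \<in> C" "G \<noteq> Gc" for G
  proof -
    define Hg where "Hg = G(0 := g0)"
    have HgI: "Hg l \<in> InjS I (N l)" if "l \<le> k" for l
      using G g0I that unfolding Hg_def C_def by (cases "l = 0") auto
    have Hgbd: "Hg l i < N l" if "l \<le> k" "i \<in> I" for l i using HgI[OF that(1)] that(2) unfolding InjS_def by auto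
    have ent: "B l $$ (Hg l i, Hg (Suc l) i) = sgn (A l $$ (Hg l i, Hg (Suc l) i)) * (if cyc_e l (Hg l i) (Hg (Suc l) i) then 1 else \<epsilon>)"
      if "l < k" "i \<in> I" for l i
    proof (rule Bent)
      show "Hg l i < n l" using Hgbd[of l i] that unfolding N_def by simp
      show "Hg (Suc l) i < n (Suc l mod k)" using Hgbd[of "Suc l" i] that unfolding N_def by simp
    qed
    have abs1: "0 \<le> \<bar>B l $$ (Hg l i, Hg (Suc l) i)\<bar> \<and> \<bar>B l $$ (Hg l i, Hg (Suc l) i)\<bar> \<le> 1"
      if "l < k" "i \<in> I" for l i
      unfolding ent[OF that] using epos by (auto simp: abs_mult sgn_if)
    obtain i0 l0 where il0: "i0 \<in> I" "l0 < k" "\<not> cyc_e l0 (Hg l0 i0) (Hg (Suc l0) i0)"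
    proof (rule ccontr)
      assume "\<not> thesis"
      then have allc: "\<forall>i\<in>I. \<forall>l<k. cyc_e l (Hg l i) (Hg (Suc l) i)" using that by blast
      have eqH: "\<forall>i\<in>I. Hg l i = H l i" if "l \<le> k" for l
        using that
      proof (induction l)
        case 0 then show ?case unfolding Hg_def g0_def using H0 by simp
      next
        case (Suc l)
        show ?case
        proof
          fix i assume i: "i \<in> I"
          obtain i' where i': "i' \<in> I" "H l i' = Hg l i" "H (Suc l) i' = Hg (Suc l) i"
          proof -
            have lk: "l < k" using Suc.prems by simp
            have "cyc_e l (Hg l i) (Hg (Suc l) i)" using allc i lk by blast
            then show ?thesis using that unfolding cyc_e_def by blast
          qed
          have "H l i' = H l i" using i'(2) Suc.IH Suc.prems i by simp
          then have "i' = i" using Hinj[of l] Suc.prems i i'(1) by (meson inj_onD Suc_leD)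
          then show "Hg (Suc l) i = H (Suc l) i" using i'(3) by simp
        qed
      qed
      have "G = Gc"
      proof (rule ext)
        fix l show "G l = Gc l"
        proof (cases "l \<in> {Suc 0..k}")
          case True
          then have l0: "l \<noteq> 0" "l \<le> k" by auto
          have m1: "G l \<in> PiE I (\<lambda>_. {0..<N l})" using G(1) True unfolding C_def InjS_def by auto
          have m2: "H l \<in> PiE I (\<lambda>_. {0..<N l})" using HInj[OF l0(2)] unfolding InjS_def by auto
          have eqi: "\<forall>i\<in>I. G l i = H l i" using eqH[OF l0(2)] l0 unfolding Hg_def by simp
          have "G l = H l" by (rule PiE_ext[OF m1 m2]) (use eqi in auto)
          then show ?thesis unfolding Gc_def using True by simp
        next
          case False
          then show ?thesis using PiE_arb[OF G(1)[unfolded C_def] False] False unfolding Gc_def by auto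
        qed
      qed
      then show False using G(2) by simp
    qed
    have inner: "(\<Prod>l\<in>{0..<k}. \<bar>B l $$ (Hg l i0, Hg (Suc l) i0)\<bar>) \<le> \<epsilon>"
    proof (rule prod_le_eps[where xz=l0])
      show "finite {0..<k}" by simp
      show "\<And>l. l \<in> {0..<k} \<Longrightarrow> 0 \<le> \<bar>B l $$ (Hg l i0, Hg (Suc l) i0)\<bar> \<and> \<bar>B l $$ (Hg l i0, Hg (Suc l) i0)\<bar> \<le> 1"
        using abs1 il0(1) by simp
      show "l0 \<in> {0..<k}" using il0(2) by simp
      show "\<bar>B l0 $$ (Hg l0 i0, Hg (Suc l0) i0)\<bar> \<le> \<epsilon>"
        unfolding ent[OF il0(2,1)] using il0(3) epos by (auto simp: abs_mult sgn_if)
    qed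
    have P: "\<bar>\<Prod>i\<in>I. \<Prod>l\<in>{0..<k}. B l $$ (Hg l i, Hg (Suc l) i)\<bar> \<le> \<epsilon>"
    proof -
      have "\<bar>\<Prod>i\<in>I. \<Prod>l\<in>{0..<k}. B l $$ (Hg l i, Hg (Suc l) i)\<bar> = (\<Prod>i\<in>I. \<Prod>l\<in>{0..<k}. \<bar>B l $$ (Hg l i, Hg (Suc l) i)\<bar>)"
        by (simp add: abs_prod)
      also have "\<dots> \<le> \<epsilon>"
      proof (rule prod_le_eps[where xz=i0])
        show "finite I" by (rule finI)
        show "i0 \<in> I" by (rule il0(1))
        show "(\<Prod>l\<in>{0..<k}. \<bar>B l $$ (Hg l i0, Hg (Suc l) i0)\<bar>) \<le> \<epsilon>" by (rule inner)
        fix i assume i: "i \<in> I"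
        show "0 \<le> (\<Prod>l\<in>{0..<k}. \<bar>B l $$ (Hg l i, Hg (Suc l) i)\<bar>) \<and> (\<Prod>l\<in>{0..<k}. \<bar>B l $$ (Hg l i, Hg (Suc l) i)\<bar>) \<le> 1"
          using abs1 i by (auto intro!: prod_nonneg prod_le_1)
      qed
      finally show ?thesis .
    qed
    define S where "S = (if Hg k ` I = I then of_int (sign (restrict_id (Hg k) I)) else (0::real))"
    have S1: "\<bar>S\<bar> \<le> 1" unfolding S_def sign_def by simp
    have "W 0 Hg = S * (\<Prod>i\<in>I. \<Prod>l\<in>{0..<k}. B l $$ (Hg l i, Hg (Suc l) i))" unfolding W_def S_def by simp
    also have "\<dots> \<le> \<bar>S * (\<Prod>i\<in>I. \<Prod>l\<in>{0..<k}. B l $$ (Hg l i, Hg (Suc l) i))\<bar>" by simp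
    also have "\<dots> = \<bar>S\<bar> * \<bar>\<Prod>i\<in>I. \<Prod>l\<in>{0..<k}. B l $$ (Hg l i, Hg (Suc l) i)\<bar>" by (simp add: abs_mult)
    also have "\<dots> \<le> 1 * \<epsilon>" using S1 P by (intro mult_mono) auto
    finally show ?thesis unfolding Hg_def by simp
  qed
  have split: "(\<Sum>G\<in>C. W 0 (G(0 := g0))) = W 0 (Gc(0 := g0)) + (\<Sum>G\<in>C - {Gc}. W 0 (G(0 := g0)))"
    using finC GcC by (simp add: sum.remove)
  have b1: "(\<Sum>G\<in>C - {Gc}. W 0 (G(0 := g0))) \<le> (\<Sum>G\<in>C - {Gc}. \<epsilon>)"
    using T2 by (intro sum_mono) auto
  have b2: "(\<Sum>G\<in>C - {Gc}. \<epsilon>) \<le> real (card C) * \<epsilon>"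
  proof -
    have "card (C - {Gc}) \<le> card C" using finC by (simp add: card_mono)
    then show ?thesis using epos by (simp add: mult_right_mono)
  qed
  have "det (submatrix M I I) < 0" using dexp T1 ecard split b1 b2 by linarith
  have "\<not> P0_matrix M"
  proof
    assume "P0_matrix M"
    moreover have "I \<noteq> {}" using x0I by auto
    ultimately have "det (submatrix M I I) \<ge> 0" using Isub0 unfolding P0_matrix_def by blast
    then show False using \<open>det (submatrix M I I) < 0\<close> by simp
  qed
  then show ?thesis using Mq by blast
qed


theorem theorem2:
  fixes k :: nat and n :: "nat \<Rightarrow> nat" and A :: "nat \<Rightarrow> real mat"
  assumes "k > 0"
    and "\<forall>j<k. n j > 0"
    and "\<forall>j<k. A j \<in> carrier_mat (n j) (n ((j + 1) mod k))"
  shows "(\<forall>M \<in> qual_product k n A. P0_matrix M) \<longleftrightarrow> e_cycle_free k n A"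
proof
  assume all: "\<forall>M \<in> qual_product k n A. P0_matrix M"
  show "e_cycle_free k n A"
  proof (rule ccontr)
    assume "\<not> e_cycle_free k n A"
    then obtain M where "M \<in> qual_product k n A" "\<not> P0_matrix M"
      using backward[OF assms(1) assms(3)] by blast
    then show False using all by blast
  qed
next
  assume "e_cycle_free k n A"
  then show "\<forall>M \<in> qual_product k n A. P0_matrix M"
    using forward[OF assms(1) assms(3)] by blast
qed

end
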